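(* Let $n\in\mathbb{N}$ and let $f,g:\mathbb{R}^n\to\mathbb{R}$ be probability density functions. For $m\in\mathbb{N}$ let \[ \mathcal{M}^{g}_m=\left\{ h:\ h(\cdot)=\sum_{i=1}^{m}\frac{c_{i}}{\sigma_{i}^{n}}\,g\!\left(\frac{\cdot-\mu_{i}}{\sigma_{i}}\right),\ \mu_{i}\in\mathbb{R}^{n},\ \sigma_{i}\in(0,\infty),\ c_i\ge 0,\ \sum_{i=1}^m c_i=1\right\}, \qquad \mathcal{M}^g=\bigcup_{m\in\mathbb{N}}\mathcal{M}^g_m . \] Then: (a) If $f$ and $g$ are continuous and $\mathbb{K}\subset\mathbb{R}^n$ is compact, then there exists a sequence $\{h_m^g\}_{m=1}^\infty\subset\mathcal{M}^g$ with $h_m^g\in\mathcal{M}^g_m$ such that \[ \lim_{m\to\infty}\sup_{x\in\mathbb{K}}\left|f(x)-h_m^g(x)\right|=0 . \] (b) If $p\in[1,\infty)$, $f\in\mathcal{L}_p(\mathbb{R}^n)$ and $g\in\mathcal{L}_\infty(\mathbb{R}^n)$, then there exists a sequence $\{h_m^g\}_{m=1}^\infty\subset\mathcal{M}^g$ with $h_m^g\in\mathcal{M}^g_m$ such that \[ \lim_{m\to\infty}\left\Vert f-h_m^g\right\Vert_{\mathcal{L}_p(\mathbb{R}^n)}=0 . \]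
   Context: A probability density function (PDF) on $\mathbb{R}^n$ is a Lebesgue measurable function $f\ge 0$ with $\int f\,\mathrm{d}\lambda=1$, where $\lambda$ is Lebesgue measure. $\mathcal{L}_p(\mathbb{R}^n)$ denotes the usual Lebesgue space with norm $\|f\|_{\mathcal{L}_p}=(\int|f|^p\,\mathrm{d}\lambda)^{1/p}$ for $p<\infty$, and $\mathcal{L}_\infty$ is the space of essentially bounded measurable functions. Elements of $\mathcal{M}^g_m$ are called $m$-component location-scale finite mixtures of $g$. *)

theory Defs
  imports "HOL-Analysis.Analysis"
begin

text \<open>Probability density function on the Euclidean space 'a (= R^n, n = DIM('a)).\<close>
definition is_pdf :: "('a::euclidean_space \<Rightarrow> real) \<Rightarrow> bool" where
  "is_pdf f \<longleftrightarrow> f \<in> borel_measurable lebesgue \<and> (\<forall>x. 0 \<le> f x)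
     \<and> (\<integral>\<^sup>+ x. ennreal (f x) \<partial>lebesgue) = 1"

definition mixtures :: "('a::euclidean_space \<Rightarrow> real) \<Rightarrow> nat \<Rightarrow> ('a \<Rightarrow> real) set" where
  "mixtures g m = {h. \<exists>(c::nat \<Rightarrow> real) (\<mu>::nat \<Rightarrow> 'a) (\<sigma>::nat \<Rightarrow> real).
      (\<forall>i<m. 0 < \<sigma> i \<and> 0 \<le> c i) \<and> (\<Sum>i<m. c i) = 1 \<and>
      h = (\<lambda>x. \<Sum>i<m. c i / \<sigma> i ^ DIM('a) * g ((x - \<mu> i) /\<^sub>R \<sigma> i))}"

definition in_Lp :: "real \<Rightarrow> ('a::euclidean_space \<Rightarrow> real) \<Rightarrow> bool" where
  "in_Lp p f \<longleftrightarrow> f \<in> borel_measurable lebesgue \<and>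
     (\<integral>\<^sup>+ x. ennreal (\<bar>f x\<bar> powr p) \<partial>lebesgue) < \<infinity>"

definition in_Linf :: "('a::euclidean_space \<Rightarrow> real) \<Rightarrow> bool" where
  "in_Linf f \<longleftrightarrow> f \<in> borel_measurable lebesgue \<and>
     (\<exists>B. AE x in lebesgue. \<bar>f x\<bar> \<le> B)"

text \<open>p-th power of the L_p distance (the L_p norm tends to 0 iff this does).\<close>
definition Lp_dist_pow :: "real \<Rightarrow> ('a::euclidean_space \<Rightarrow> real) \<Rightarrow> ('a \<Rightarrow> real) \<Rightarrow> ennreal" where
  "Lp_dist_pow p f h = (\<integral>\<^sup>+ x. ennreal (\<bar>f x - h x\<bar> powr p) \<partial>lebesgue)"

end

theory Submission
  imports Defs
begin

lemma nn_integral_lborel_affine: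
  fixes u :: "'a::euclidean_space \<Rightarrow> ennreal"
  assumes u: "u \<in> borel_measurable borel" and c: "c \<noteq> 0"
  shows "(\<integral>\<^sup>+y. u y \<partial>lborel) = ennreal (\<bar>c\<bar>^DIM('a)) * (\<integral>\<^sup>+z. u (t + c *\<^sub>R z) \<partial>lborel)"
proof -
  have eq: "lborel = density (distr lborel borel (\<lambda>x. t + c *\<^sub>R x)) (\<lambda>_. \<bar>c\<bar>^DIM('a))"
    by (rule lborel_affine[OF c])
  have "(\<integral>\<^sup>+y. u y \<partial>lborel) = (\<integral>\<^sup>+y. u y \<partial>(density (distr lborel borel (\<lambda>x. t + c *\<^sub>R x)) (\<lambda>_. \<bar>c\<bar>^DIM('a))))"
    by (subst eq) (rule refl)
  also have "\<dots> = (\<integral>\<^sup>+y. ennreal (\<bar>c\<bar>^DIM('a)) * u y \<partial>(distr lborel borel (\<lambda>x. t + c *\<^sub>R x)))"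
    using u by (subst nn_integral_density) auto
  also have "\<dots> = (\<integral>\<^sup>+z. ennreal (\<bar>c\<bar>^DIM('a)) * u (t + c *\<^sub>R z) \<partial>lborel)"
    using u by (subst nn_integral_distr) auto
  also have "\<dots> = ennreal (\<bar>c\<bar>^DIM('a)) * (\<integral>\<^sup>+z. u (t + c *\<^sub>R z) \<partial>lborel)"
    using u by (subst nn_integral_cmult) auto
  finally show ?thesis .
qed

lemma nn_integral_lborel_translate:
  fixes u :: "'a::euclidean_space \<Rightarrow> ennreal"
  assumes u: "u \<in> borel_measurable borel"
  shows "(\<integral>\<^sup>+x. u (x + a) \<partial>lborel) = (\<integral>\<^sup>+z. u z \<partial>lborel)"
  using nn_integral_lborel_affine[OF u, of 1 a] by (simp add: add.commute)

lemma nn_integral_lborel_reflect_scale: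
  fixes u :: "'a::euclidean_space \<Rightarrow> ennreal"
  assumes u: "u \<in> borel_measurable borel" and s: "s > 0"
  shows "(\<integral>\<^sup>+y. u ((x - y) /\<^sub>R s) \<partial>lborel) = ennreal (s^DIM('a)) * (\<integral>\<^sup>+z. u z \<partial>lborel)"
proof -
  have m: "(\<lambda>y. u ((x - y) /\<^sub>R s)) \<in> borel_measurable borel"
    using u by measurable
  have "(\<integral>\<^sup>+y. u ((x - y) /\<^sub>R s) \<partial>lborel) = ennreal (\<bar>-s\<bar>^DIM('a)) * (\<integral>\<^sup>+z. u ((x - (x + (-s) *\<^sub>R z)) /\<^sub>R s) \<partial>lborel)"
    by (rule nn_integral_lborel_affine[OF m]) (use s in auto)
  also have "\<dots> = ennreal (s^DIM('a)) * (\<integral>\<^sup>+z. u z \<partial>lborel)"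
    using s by simp
  finally show ?thesis .
qed

lemma nn_integral_lborel_shift_scale:
  fixes u :: "'a::euclidean_space \<Rightarrow> ennreal"
  assumes u: "u \<in> borel_measurable borel" and s: "s > 0"
  shows "(\<integral>\<^sup>+x. u ((x - a) /\<^sub>R s) \<partial>lborel) = ennreal (s^DIM('a)) * (\<integral>\<^sup>+z. u z \<partial>lborel)"
proof -
  have m: "(\<lambda>x. u ((x - a) /\<^sub>R s)) \<in> borel_measurable borel"
    using u by measurable
  have "(\<integral>\<^sup>+x. u ((x - a) /\<^sub>R s) \<partial>lborel) = ennreal (\<bar>s\<bar>^DIM('a)) * (\<integral>\<^sup>+z. u ((a + s *\<^sub>R z - a) /\<^sub>R s) \<partial>lborel)"
    by (rule nn_integral_lborel_affine[OF m]) (use s in auto)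
  also have "\<dots> = ennreal (s^DIM('a)) * (\<integral>\<^sup>+z. u z \<partial>lborel)"
    using s by simp
  finally show ?thesis .
qed

lemma ennreal_tendsto_0I:
  fixes a :: "nat \<Rightarrow> ennreal"
  assumes "\<And>e. e > 0 \<Longrightarrow> eventually (\<lambda>k. a k < ennreal e) sequentially"
  shows "a \<longlonglongrightarrow> 0"
proof (rule order_tendstoI)
  fix y :: ennreal assume "y < 0" then show "eventually (\<lambda>k. y < a k) sequentially" by simp
next
  fix y :: ennreal assume y: "0 < y"
  obtain e where e: "e > 0" "ennreal e \<le> y"
  proof (cases y rule: ennreal_cases)
    case (real r) then show ?thesis using y that[of r] by auto
  next
    case top then show ?thesis using that[of 1] by auto
  qed
  show "eventually (\<lambda>k. a k < y) sequentially"
    using assms[OF e(1)] by eventually_elim (use e in auto)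
qed

lemma ennreal_tendsto_0D:
  fixes a :: "nat \<Rightarrow> ennreal"
  assumes "a \<longlonglongrightarrow> 0" "e > 0"
  shows "eventually (\<lambda>k. a k < ennreal e) sequentially"
  using order_tendstoD(2)[OF assms(1), of "ennreal e"] assms(2) by simp

lemma ennreal_le_tendsto_0:
  fixes a b :: "nat \<Rightarrow> ennreal"
  assumes "\<And>k. a k \<le> b k" "b \<longlonglongrightarrow> 0"
  shows "a \<longlonglongrightarrow> 0"
  by (rule tendsto_sandwich[of "\<lambda>_. 0" a sequentially b 0]) (use assms in auto)

definition tcs :: "('a::euclidean_space \<Rightarrow> real) \<Rightarrow> bool" where
  "tcs u \<longleftrightarrow> u \<in> borel_measurable borel \<and>
     (\<forall>X. X \<longlonglongrightarrow> 0 \<longrightarrow> (\<lambda>k. \<integral>\<^sup>+x. ennreal \<bar>u (x + X k) - u x\<bar> \<partial>lborel) \<longlonglongrightarrow> 0)"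

lemma Phi_tendsto:
  fixes U :: "'a::euclidean_space set"
  assumes U: "open U" "emeasure lborel U < \<infinity>" and X: "X \<longlonglongrightarrow> 0"
  shows "(\<lambda>k. \<integral>\<^sup>+x. ennreal (indicator U x * (1 - indicator U (x + X k))) \<partial>lborel) \<longlonglongrightarrow> 0"
proof -
  have [measurable]: "U \<in> sets borel" using U by simp
  have "(\<lambda>k. \<integral>\<^sup>+x. ennreal (indicator U x * (1 - indicator U (x + X k))) \<partial>lborel) \<longlonglongrightarrow> (\<integral>\<^sup>+x. 0 \<partial>(lborel::'a measure))"
  proof (rule nn_integral_dominated_convergence[where u'="\<lambda>x. 0"])
    show "(\<integral>\<^sup>+ x. indicator U x \<partial>lborel) < \<infinity>" using U by simp
    show "AE x in lborel. ennreal (indicator U x * (1 - indicator U (x + X k))) \<le> (indicator U x :: ennreal)" for k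
      by (auto simp: indicator_def)
    show "AE x in lborel. (\<lambda>k. ennreal (indicator U x * (1 - indicator U (x + X k)))) \<longlonglongrightarrow> 0"
    proof (rule AE_I2)
      fix x
      show "(\<lambda>k. ennreal (indicator U x * (1 - indicator U (x + X k)))) \<longlonglongrightarrow> 0"
      proof (cases "x \<in> U")
        case True
        have "(\<lambda>k. x + X k) \<longlonglongrightarrow> x + 0" by (intro tendsto_intros X)
        then have "eventually (\<lambda>k. x + X k \<in> U) sequentially"
          using True U(1) by (simp add: topological_tendstoD)
        then have "eventually (\<lambda>k. ennreal (indicator U x * (1 - indicator U (x + X k))) = 0) sequentially"
          by eventually_elim (auto simp: indicator_def)
        then show ?thesis by (rule tendsto_eventually)
      next
        case False then show ?thesis by (simp add: indicator_def)
      qed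
    qed
  qed auto
  then show ?thesis by simp
qed

lemma tcs_open:
  fixes U :: "'a::euclidean_space set"
  assumes U: "open U" "emeasure lborel U < \<infinity>"
  shows "tcs (indicator U)"
  unfolding tcs_def
proof (intro conjI allI impI)
  have [measurable]: "U \<in> sets borel" using U by simp
  show "indicator U \<in> borel_measurable borel" by simp
  fix X :: "nat \<Rightarrow> 'a" assume X: "X \<longlonglongrightarrow> 0"
  have mX: "(\<lambda>k. - X k) \<longlonglongrightarrow> 0" using tendsto_minus[OF X] by simp
  have eq: "(\<integral>\<^sup>+x. ennreal \<bar>indicator U (x + t) - indicator U x\<bar> \<partial>lborel)
      = (\<integral>\<^sup>+x. ennreal (indicator U x * (1 - indicator U (x + t))) \<partial>lborel)
      + (\<integral>\<^sup>+x. ennreal (indicator U x * (1 - indicator U (x + - t))) \<partial>lborel)" for t :: 'a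
  proof -
    have "(\<integral>\<^sup>+x. ennreal \<bar>indicator U (x + t) - indicator U x\<bar> \<partial>lborel)
      = (\<integral>\<^sup>+x. ennreal (indicator U x * (1 - indicator U (x + t))) + ennreal (indicator U (x + t) * (1 - indicator U x)) \<partial>lborel)"
      by (intro nn_integral_cong) (auto simp: indicator_def)
    also have "\<dots> = (\<integral>\<^sup>+x. ennreal (indicator U x * (1 - indicator U (x + t))) \<partial>lborel)
       + (\<integral>\<^sup>+x. ennreal (indicator U (x + t) * (1 - indicator U x)) \<partial>lborel)"
      by (rule nn_integral_add) auto
    also have "(\<integral>\<^sup>+x. ennreal (indicator U (x + t) * (1 - indicator U x)) \<partial>lborel)
       = (\<integral>\<^sup>+x. ennreal (indicator U (x + - t + t) * (1 - indicator U (x + - t))) \<partial>lborel)"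
      by (rule nn_integral_lborel_translate[symmetric]) simp
    also have "\<dots> = (\<integral>\<^sup>+x. ennreal (indicator U x * (1 - indicator U (x + - t))) \<partial>lborel)"
      by (simp add: mult.commute)
    finally show ?thesis .
  qed
  show "(\<lambda>k. \<integral>\<^sup>+x. ennreal \<bar>indicator U (x + X k) - indicator U x\<bar> \<partial>lborel) \<longlonglongrightarrow> 0"
    unfolding eq using tendsto_add[OF Phi_tendsto[OF U X] Phi_tendsto[OF U mX]] by simp
qed

lemma ennreal_add_less2:
  fixes a b :: ennreal
  assumes "a < ennreal x" "b < ennreal y"
  shows "a + b < ennreal (x + y)"
proof -
  have x: "x > 0" using assms(1) by (metis ennreal_less_zero_iff not_less_zero ennreal_eq_0_iff not_le less_le)
  have y: "y > 0" using assms(2) by (metis ennreal_less_zero_iff not_less_zero ennreal_eq_0_iff not_le less_le)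
  obtain a' where a: "a = ennreal a'" "a' \<ge> 0" using assms(1) by (cases a rule: ennreal_cases) auto
  obtain b' where b: "b = ennreal b'" "b' \<ge> 0" using assms(2) by (cases b rule: ennreal_cases) auto
  have "a' < x" using assms(1) a x by (simp add: ennreal_less_iff)
  moreover have "b' < y" using assms(2) b y by (simp add: ennreal_less_iff)
  ultimately have "ennreal (a' + b') < ennreal (x + y)"
    using x y by (intro ennreal_lessI) auto
  then show ?thesis using a b by (simp add: ennreal_plus[symmetric] del: ennreal_plus)
qed

lemma tcs_measurable: "tcs u \<Longrightarrow> u \<in> borel_measurable borel"
  by (simp add: tcs_def)

lemma tcs_cong: "tcs u \<Longrightarrow> (\<And>x. u x = v x) \<Longrightarrow> tcs v"
proof -
  assume "tcs u" "\<And>x. u x = v x"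
  then have "u = v" by auto
  then show "tcs v" using \<open>tcs u\<close> by simp
qed

lemma tcs_zero: "tcs (\<lambda>x. 0)"
  by (simp add: tcs_def)

lemma tcs_add:
  assumes u: "tcs u" and v: "tcs v"
  shows "tcs (\<lambda>x. u x + v x)"
  unfolding tcs_def
proof (intro conjI allI impI)
  have [measurable]: "u \<in> borel_measurable borel" "v \<in> borel_measurable borel"
    using u v by (auto simp: tcs_def)
  show "(\<lambda>x. u x + v x) \<in> borel_measurable borel" by simp
  fix X :: "nat \<Rightarrow> 'a" assume X: "X \<longlonglongrightarrow> 0"
  have lu: "(\<lambda>k. \<integral>\<^sup>+x. ennreal \<bar>u (x + X k) - u x\<bar> \<partial>lborel) \<longlonglongrightarrow> 0" using u X by (auto simp: tcs_def)
  have lv: "(\<lambda>k. \<integral>\<^sup>+x. ennreal \<bar>v (x + X k) - v x\<bar> \<partial>lborel) \<longlonglongrightarrow> 0" using v X by (auto simp: tcs_def)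
  show "(\<lambda>k. \<integral>\<^sup>+x. ennreal \<bar>u (x + X k) + v (x + X k) - (u x + v x)\<bar> \<partial>lborel) \<longlonglongrightarrow> 0"
  proof (rule ennreal_le_tendsto_0)
    show "(\<lambda>k. (\<integral>\<^sup>+x. ennreal \<bar>u (x + X k) - u x\<bar> \<partial>lborel) + (\<integral>\<^sup>+x. ennreal \<bar>v (x + X k) - v x\<bar> \<partial>lborel)) \<longlonglongrightarrow> 0"
      using tendsto_add[OF lu lv] by simp
    fix k
    have "(\<integral>\<^sup>+x. ennreal \<bar>u (x + X k) + v (x + X k) - (u x + v x)\<bar> \<partial>lborel)
       \<le> (\<integral>\<^sup>+x. ennreal \<bar>u (x + X k) - u x\<bar> + ennreal \<bar>v (x + X k) - v x\<bar> \<partial>lborel)"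
      by (intro nn_integral_mono) (simp add: ennreal_plus[symmetric] del: ennreal_plus)
    also have "\<dots> = (\<integral>\<^sup>+x. ennreal \<bar>u (x + X k) - u x\<bar> \<partial>lborel) + (\<integral>\<^sup>+x. ennreal \<bar>v (x + X k) - v x\<bar> \<partial>lborel)"
      by (rule nn_integral_add) auto
    finally show "(\<integral>\<^sup>+x. ennreal \<bar>u (x + X k) + v (x + X k) - (u x + v x)\<bar> \<partial>lborel)
       \<le> (\<integral>\<^sup>+x. ennreal \<bar>u (x + X k) - u x\<bar> \<partial>lborel) + (\<integral>\<^sup>+x. ennreal \<bar>v (x + X k) - v x\<bar> \<partial>lborel)" .
  qed
qed

lemma tcs_cmult:
  assumes u: "tcs u"
  shows "tcs (\<lambda>x. c * u x)"
  unfolding tcs_def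
proof (intro conjI allI impI)
  have [measurable]: "u \<in> borel_measurable borel"
    using u by (auto simp: tcs_def)
  show "(\<lambda>x. c * u x) \<in> borel_measurable borel" by simp
  fix X :: "nat \<Rightarrow> 'a" assume X: "X \<longlonglongrightarrow> 0"
  have lu: "(\<lambda>k. \<integral>\<^sup>+x. ennreal \<bar>u (x + X k) - u x\<bar> \<partial>lborel) \<longlonglongrightarrow> 0" using u X by (auto simp: tcs_def)
  have eq: "(\<integral>\<^sup>+x. ennreal \<bar>c * u (x + X k) - c * u x\<bar> \<partial>lborel) = ennreal \<bar>c\<bar> * (\<integral>\<^sup>+x. ennreal \<bar>u (x + X k) - u x\<bar> \<partial>lborel)" for k
  proof -
    have "(\<integral>\<^sup>+x. ennreal \<bar>c * u (x + X k) - c * u x\<bar> \<partial>lborel) = (\<integral>\<^sup>+x. ennreal \<bar>c\<bar> * ennreal \<bar>u (x + X k) - u x\<bar> \<partial>lborel)"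
      by (intro nn_integral_cong) (simp add: ennreal_mult[symmetric] abs_mult right_diff_distrib[symmetric])
    also have "\<dots> = ennreal \<bar>c\<bar> * (\<integral>\<^sup>+x. ennreal \<bar>u (x + X k) - u x\<bar> \<partial>lborel)"
      by (rule nn_integral_cmult) auto
    finally show ?thesis .
  qed
  show "(\<lambda>k. \<integral>\<^sup>+x. ennreal \<bar>c * u (x + X k) - c * u x\<bar> \<partial>lborel) \<longlonglongrightarrow> 0"
    unfolding eq using ennreal_tendsto_cmult[OF _ lu, of "ennreal \<bar>c\<bar>"] by simp
qed

lemma tcs_sum:
  assumes "finite I" "\<And>i. i \<in> I \<Longrightarrow> tcs (u i)"
  shows "tcs (\<lambda>x. \<Sum>i\<in>I. u i x)"
  using assms
proof (induction I rule: finite_induct)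
  case empty then show ?case by (simp add: tcs_zero)
next
  case (insert i I)
  then have "tcs (\<lambda>x. u i x + (\<Sum>i\<in>I. u i x))"
    by (intro tcs_add) auto
  then show ?case using insert by simp
qed

lemma tcs_borel_set:
  fixes A :: "'a::euclidean_space set"
  assumes A: "A \<in> sets borel" "emeasure lborel A < \<infinity>"
  shows "tcs (indicator A)"
  unfolding tcs_def
proof (intro conjI allI impI)
  show "indicator A \<in> borel_measurable borel" using A by simp
  fix X :: "nat \<Rightarrow> 'a" assume X: "X \<longlonglongrightarrow> 0"
  show "(\<lambda>k. \<integral>\<^sup>+x. ennreal \<bar>indicator A (x + X k) - indicator A x\<bar> \<partial>lborel) \<longlonglongrightarrow> 0"
  proof (rule ennreal_tendsto_0I)
    fix e :: real assume e: "e > 0"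
    obtain U where U: "open U" "A \<subseteq> U" "emeasure lborel (U - A) < ennreal (e/3)"
      using outer_regular_lborel[OF A(1), of "e/3"] e by auto
    have [measurable]: "U \<in> sets borel" "A \<in> sets borel" using U A by auto
    have "U = A \<union> (U - A)" using U(2) by blast
    then have "emeasure lborel U = emeasure lborel (A \<union> (U - A))" by simp
    also have "\<dots> \<le> emeasure lborel A + emeasure lborel (U - A)"
      by (rule emeasure_subadditive) auto
    also have "\<dots> < \<infinity>"
    proof -
      have "emeasure lborel (U - A) < \<infinity>" using U(3) by (metis ennreal_less_top infinity_ennreal_def order.strict_trans)
      then show ?thesis using A(2) by (simp add: ennreal_add_less_top less_top)
    qed
    finally have Ufin: "emeasure lborel U < \<infinity>" .
    have tU: "tcs (indicator U)" by (rule tcs_open[OF U(1) Ufin])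
    then have "(\<lambda>k. \<integral>\<^sup>+x. ennreal \<bar>indicator U (x + X k) - indicator U x\<bar> \<partial>lborel) \<longlonglongrightarrow> 0"
      using X by (simp add: tcs_def)
    from ennreal_tendsto_0D[OF this, of "e/3"] e
    have ev: "eventually (\<lambda>k. (\<integral>\<^sup>+x. ennreal \<bar>indicator U (x + X k) - indicator U x\<bar> \<partial>lborel) < ennreal (e/3)) sequentially"
      by simp
    show "eventually (\<lambda>k. (\<integral>\<^sup>+x. ennreal \<bar>indicator A (x + X k) - indicator A x\<bar> \<partial>lborel) < ennreal e) sequentially"
      using ev
    proof eventually_elim
      case (elim k)
      let ?t = "X k"
      have "(\<integral>\<^sup>+x. ennreal \<bar>indicator A (x + ?t) - indicator A x\<bar> \<partial>lborel)
          \<le> (\<integral>\<^sup>+x. ennreal \<bar>indicator U (x + ?t) - indicator U x\<bar> + (indicator (U - A) (x + ?t) + indicator (U - A) x) \<partial>lborel)"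
      proof (intro nn_integral_mono)
        fix x
        show "ennreal \<bar>indicator A (x + ?t) - indicator A x\<bar>
          \<le> ennreal \<bar>indicator U (x + ?t) - indicator U x\<bar> + (indicator (U - A) (x + ?t) + indicator (U - A) x)"
          using U(2) by (cases "x + ?t \<in> A"; cases "x \<in> A"; cases "x + ?t \<in> U"; cases "x \<in> U") (auto simp: indicator_def)
      qed
      also have "\<dots> = (\<integral>\<^sup>+x. ennreal \<bar>indicator U (x + ?t) - indicator U x\<bar> \<partial>lborel)
           + ((\<integral>\<^sup>+x. indicator (U - A) (x + ?t) \<partial>lborel) + (\<integral>\<^sup>+x. indicator (U - A) x \<partial>lborel))"
        by (subst nn_integral_add, simp, simp, subst nn_integral_add) auto
      also have "(\<integral>\<^sup>+x. indicator (U - A) (x + ?t) \<partial>lborel) = emeasure lborel (U - A)"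
        by (subst nn_integral_lborel_translate) auto
      also have "(\<integral>\<^sup>+x. indicator (U - A) x \<partial>lborel) = emeasure lborel (U - A)"
        by simp
      also have "(\<integral>\<^sup>+x. ennreal \<bar>indicator U (x + ?t) - indicator U x\<bar> \<partial>lborel) + (emeasure lborel (U - A) + emeasure lborel (U - A))
           < ennreal (e/3 + (e/3 + e/3))"
        by (intro ennreal_add_less2 elim U(3))
      finally show ?case by simp
    qed
  qed
qed

lemma tcs_simple:
  fixes s :: "'a::euclidean_space \<Rightarrow> real"
  assumes "Bochner_Integration.simple_bochner_integrable lborel s"
  shows "tcs s"
proof -
  from assms have sf: "simple_function lborel s" and fin: "emeasure lborel {y \<in> space lborel. s y \<noteq> 0} \<noteq> \<infinity>"
    by (auto elim: Bochner_Integration.simple_bochner_integrable.cases)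
  let ?V = "s ` space lborel - {0}"
  have finV: "finite ?V" using sf by (auto simp: simple_function_def)
  have rep: "(\<Sum>v\<in>?V. v * indicator (s -` {v}) x) = s x" for x
  proof -
    have "(\<Sum>v\<in>?V. v * indicator (s -` {v}) x) = (\<Sum>v\<in>?V. if s x = v then v else 0)"
      by (intro sum.cong) (auto simp: indicator_def)
    also have "\<dots> = (if s x \<in> ?V then s x else 0)"
      using finV by (simp add: sum.delta)
    also have "\<dots> = s x" by auto
    finally show ?thesis .
  qed
  have "tcs (\<lambda>x. \<Sum>v\<in>?V. v * indicator (s -` {v}) x)"
  proof (rule tcs_sum[OF finV])
    fix v assume v: "v \<in> ?V"
    have meas: "s -` {v} \<in> sets borel"
      using simple_functionD(2)[OF sf, of "{v}"] by simp
    have "s -` {v} \<subseteq> {y \<in> space lborel. s y \<noteq> 0}" using v by auto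
    then have "emeasure lborel (s -` {v}) \<le> emeasure lborel {y \<in> space lborel. s y \<noteq> 0}"
    proof (rule emeasure_mono)
      have [measurable]: "s \<in> borel_measurable borel" using borel_measurable_simple_function[OF sf] by simp
      show "{y \<in> space lborel. s y \<noteq> 0} \<in> sets lborel" by measurable
    qed
    then have "emeasure lborel (s -` {v}) < \<infinity>" using fin by (simp add: le_less_trans less_top)
    then show "tcs (\<lambda>x. v * indicator (s -` {v}) x)"
      by (intro tcs_cmult tcs_borel_set meas)
  qed
  then show ?thesis by (rule tcs_cong) (rule rep)
qed

lemma tcs_integrable:
  fixes u :: "'a::euclidean_space \<Rightarrow> real"
  assumes "integrable lborel u"
  shows "tcs u"
proof -
  obtain s where s: "\<And>i. Bochner_Integration.simple_bochner_integrable lborel (s i)"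
    and lim: "(\<lambda>i. \<integral>\<^sup>+x. norm (u x - s i x) \<partial>lborel) \<longlonglongrightarrow> 0"
    using assms unfolding integrable.simps has_bochner_integral.simps by blast
  have [measurable]: "u \<in> borel_measurable borel" using assms by (simp add: borel_measurable_integrable)
  have ts: "tcs (s i)" for i by (rule tcs_simple[OF s])
  have [measurable]: "s i \<in> borel_measurable borel" for i using ts by (simp add: tcs_def)
  show ?thesis unfolding tcs_def
  proof (intro conjI allI impI)
    show "u \<in> borel_measurable borel" by simp
    fix X :: "nat \<Rightarrow> 'a" assume X: "X \<longlonglongrightarrow> 0"
    show "(\<lambda>k. \<integral>\<^sup>+x. ennreal \<bar>u (x + X k) - u x\<bar> \<partial>lborel) \<longlonglongrightarrow> 0"
    proof (rule ennreal_tendsto_0I)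
      fix e :: real assume e: "e > 0"
      from ennreal_tendsto_0D[OF lim, of "e/3"] e
      obtain i where i: "(\<integral>\<^sup>+x. norm (u x - s i x) \<partial>lborel) < ennreal (e/3)"
        by (auto simp: eventually_sequentially)
      have "(\<lambda>k. \<integral>\<^sup>+x. ennreal \<bar>s i (x + X k) - s i x\<bar> \<partial>lborel) \<longlonglongrightarrow> 0"
        using ts[of i] X by (simp add: tcs_def)
      from ennreal_tendsto_0D[OF this, of "e/3"] e
      have ev: "eventually (\<lambda>k. (\<integral>\<^sup>+x. ennreal \<bar>s i (x + X k) - s i x\<bar> \<partial>lborel) < ennreal (e/3)) sequentially"
        by simp
      show "eventually (\<lambda>k. (\<integral>\<^sup>+x. ennreal \<bar>u (x + X k) - u x\<bar> \<partial>lborel) < ennreal e) sequentially"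
        using ev
      proof eventually_elim
        case (elim k)
        let ?t = "X k"
        have i': "(\<integral>\<^sup>+x. ennreal \<bar>u x - s i x\<bar> \<partial>lborel) < ennreal (e/3)" using i by simp
        have "(\<integral>\<^sup>+x. ennreal \<bar>u (x + ?t) - u x\<bar> \<partial>lborel)
           \<le> (\<integral>\<^sup>+x. ennreal \<bar>s i (x + ?t) - s i x\<bar> + (ennreal \<bar>u (x + ?t) - s i (x + ?t)\<bar> + ennreal \<bar>u x - s i x\<bar>) \<partial>lborel)"
          by (intro nn_integral_mono) (simp add: ennreal_plus[symmetric] del: ennreal_plus)
        also have "\<dots> = (\<integral>\<^sup>+x. ennreal \<bar>s i (x + ?t) - s i x\<bar> \<partial>lborel)
           + ((\<integral>\<^sup>+x. ennreal \<bar>u (x + ?t) - s i (x + ?t)\<bar> \<partial>lborel) + (\<integral>\<^sup>+x. ennreal \<bar>u x - s i x\<bar> \<partial>lborel))"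
          by (subst nn_integral_add, simp, simp, subst nn_integral_add) auto
        also have "(\<integral>\<^sup>+x. ennreal \<bar>u (x + ?t) - s i (x + ?t)\<bar> \<partial>lborel) = (\<integral>\<^sup>+x. ennreal \<bar>u x - s i x\<bar> \<partial>lborel)"
          by (rule nn_integral_lborel_translate[where u="\<lambda>x. ennreal \<bar>u x - s i x\<bar>"]) simp
        also have "(\<integral>\<^sup>+x. ennreal \<bar>s i (x + ?t) - s i x\<bar> \<partial>lborel) + ((\<integral>\<^sup>+x. ennreal \<bar>u x - s i x\<bar> \<partial>lborel) + (\<integral>\<^sup>+x. ennreal \<bar>u x - s i x\<bar> \<partial>lborel))
           < ennreal (e/3 + (e/3 + e/3))"
          by (intro ennreal_add_less2 elim i')
        finally show ?case by simp
      qed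
    qed
  qed
qed

definition gsc :: "('a::euclidean_space \<Rightarrow> real) \<Rightarrow> real \<Rightarrow> 'a \<Rightarrow> real" where
  "gsc g s z = g (z /\<^sub>R s) / s ^ DIM('a)"

definition rep :: "real \<Rightarrow> 'a::euclidean_space \<Rightarrow> 'a" where
  "rep d y = (\<Sum>b\<in>Basis. (d * of_int \<lfloor>(y \<bullet> b) / d\<rfloor>) *\<^sub>R b)"

lemma rep_measurable[measurable]: "rep d \<in> borel_measurable borel"
  unfolding rep_def by measurable

lemma rep_dist:
  fixes y :: "'a::euclidean_space" and d :: real
  assumes d: "d > 0"
  shows "norm (y - rep d y) \<le> DIM('a) * d"
proof -
  have "y - rep d y = (\<Sum>b\<in>Basis. ((y \<bullet> b) - d * of_int \<lfloor>(y \<bullet> b) / d\<rfloor>) *\<^sub>R b)"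
    unfolding rep_def by (subst (1) euclidean_representation[symmetric, of y])
      (simp add: sum_subtractf scaleR_diff_left)
  also have "norm \<dots> \<le> (\<Sum>b\<in>(Basis::'a set). norm (((y \<bullet> b) - d * of_int \<lfloor>(y \<bullet> b) / d\<rfloor>) *\<^sub>R b))"
    by (rule norm_sum)
  also have "\<dots> \<le> (\<Sum>b\<in>(Basis::'a set). d)"
  proof (rule sum_mono)
    fix b :: 'a assume b: "b \<in> Basis"
    have 1: "of_int \<lfloor>(y \<bullet> b) / d\<rfloor> \<le> (y \<bullet> b) / d" by (rule of_int_floor_le)
    have 2: "(y \<bullet> b) / d < of_int \<lfloor>(y \<bullet> b) / d\<rfloor> + 1" by (rule real_of_int_floor_add_one_gt)
    have "d * of_int \<lfloor>(y \<bullet> b) / d\<rfloor> \<le> d * ((y \<bullet> b) / d)" using 1 d by (intro mult_left_mono) auto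
    then have "d * of_int \<lfloor>(y \<bullet> b) / d\<rfloor> \<le> y \<bullet> b" using d by simp
    moreover have "d * ((y \<bullet> b) / d) < d * (of_int \<lfloor>(y \<bullet> b) / d\<rfloor> + 1)" using 2 d by (intro mult_strict_left_mono) auto
    then have "y \<bullet> b < d * of_int \<lfloor>(y \<bullet> b) / d\<rfloor> + d" using d by (simp add: distrib_left)
    ultimately show "norm (((y \<bullet> b) - d * of_int \<lfloor>(y \<bullet> b) / d\<rfloor>) *\<^sub>R b) \<le> d"
      using b by simp
  qed
  also have "\<dots> = DIM('a) * d" by simp
  finally show ?thesis .
qed

lemma rep_finite:
  fixes Q :: "'a::euclidean_space set" and d :: real
  assumes Q: "bounded Q" and d: "d > 0"
  shows "finite (rep d ` Q)"
proof -
  obtain R where R: "\<And>y. y \<in> Q \<Longrightarrow> norm y \<le> R" using Q by (auto simp: bounded_iff)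
  define N where "N = \<lceil>R / d\<rceil> + 1"
  let ?F = "\<lambda>k. (\<Sum>b\<in>(Basis::'a set). (d * of_int (k b)) *\<^sub>R b)"
  have "rep d ` Q \<subseteq> ?F ` (\<Pi>\<^sub>E b\<in>Basis. {-N..N})"
  proof
    fix z assume "z \<in> rep d ` Q"
    then obtain y where y: "y \<in> Q" "z = rep d y" by auto
    let ?k = "restrict (\<lambda>b. \<lfloor>(y \<bullet> b) / d\<rfloor>) Basis"
    have "?k \<in> (\<Pi>\<^sub>E b\<in>Basis. {-N..N})"
    proof
      fix b :: 'a assume b: "b \<in> Basis"
      have yb: "\<bar>y \<bullet> b\<bar> \<le> R" using Basis_le_norm[OF b, of y] R[OF y(1)] by simp
      have u: "(y \<bullet> b) / d \<le> R / d" using yb d by (intro divide_right_mono) auto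
      have l: "- R / d \<le> (y \<bullet> b) / d" using yb d by (intro divide_right_mono) auto
      have c: "R / d \<le> of_int \<lceil>R / d\<rceil>" by (rule le_of_int_ceiling)
      have Ne: "of_int N = of_int \<lceil>R / d\<rceil> + (1::real)" by (simp add: N_def)
      have "(y \<bullet> b) / d < of_int N + 1" using u c Ne by linarith
      then have "\<lfloor>(y \<bullet> b) / d\<rfloor> \<le> N" by (simp add: floor_le_iff)
      moreover have "of_int (- N) \<le> (y \<bullet> b) / d" using l c Ne by (simp add: minus_divide_left[symmetric]) linarith
      then have "- N \<le> \<lfloor>(y \<bullet> b) / d\<rfloor>" by (simp add: le_floor_iff)
      ultimately have "- N \<le> \<lfloor>(y \<bullet> b) / d\<rfloor>" "\<lfloor>(y \<bullet> b) / d\<rfloor> \<le> N" by auto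
      then show "?k b \<in> {-N..N}" using b by simp
    qed auto
    moreover have "z = ?F ?k" using y by (simp add: rep_def)
    ultimately show "z \<in> ?F ` (\<Pi>\<^sub>E b\<in>Basis. {-N..N})" by blast
  qed
  moreover have "finite (?F ` (\<Pi>\<^sub>E b\<in>Basis. {-N..N}))"
    by (intro finite_imageI finite_PiE) auto
  ultimately show ?thesis by (rule finite_subset)
qed

lemma mixture_finite:
  fixes g :: "'a::euclidean_space \<Rightarrow> real" and P :: "'a set"
  assumes P: "finite P" and w: "\<And>p. p \<in> P \<Longrightarrow> w p \<ge> 0" and c0: "c0 \<ge> 0"
    and sum1: "(\<Sum>p\<in>P. w p) + c0 = 1" and s: "s > 0" and S: "S > 0" and m: "m \<ge> card P + 1"
  shows "(\<lambda>x. (\<Sum>p\<in>P. w p * gsc g s (x - p)) + c0 * gsc g S (x - \<mu>0)) \<in> mixtures g m"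
proof -
  obtain e where e: "bij_betw e {0..<card P} P" using ex_bij_betw_nat_finite[OF P] by blast
  let ?n = "card P"
  define c where "c i = (if i < ?n then w (e i) else if i = ?n then c0 else 0)" for i
  define \<mu> where "\<mu> i = (if i < ?n then e i else \<mu>0)" for i
  define \<sigma> where "\<sigma> i = (if i < ?n then s else if i = ?n then S else 1)" for i
  have ei: "i < ?n \<Longrightarrow> e i \<in> P" for i using e by (auto simp: bij_betw_def)
  have pos: "\<forall>i<m. 0 < \<sigma> i \<and> 0 \<le> c i"
    using s S c0 w ei by (auto simp: c_def \<sigma>_def)
  have sumP: "(\<Sum>i<?n. F (e i)) = (\<Sum>p\<in>P. F p)" for F :: "'a \<Rightarrow> real"
    using sum.reindex_bij_betw[OF e, of F] by (simp add: atLeast0LessThan)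
  have split: "(\<Sum>i<m. G i) = (\<Sum>i<?n. G i) + G ?n" if "\<And>i. i > ?n \<Longrightarrow> G i = 0" for G :: "nat \<Rightarrow> real"
  proof -
    have "(\<Sum>i<m. G i) = (\<Sum>i<Suc ?n. G i)"
      by (rule sum.mono_neutral_right) (use m that in auto)
    then show ?thesis by simp
  qed
  have sc: "(\<Sum>i<m. c i) = 1"
  proof -
    have "(\<Sum>i<m. c i) = (\<Sum>i<?n. c i) + c ?n" by (rule split) (simp add: c_def)
    also have "(\<Sum>i<?n. c i) = (\<Sum>i<?n. w (e i))" by (simp add: c_def)
    also have "\<dots> = (\<Sum>p\<in>P. w p)" by (rule sumP)
    finally show ?thesis using sum1 by (simp add: c_def)
  qed
  have h: "(\<lambda>x. (\<Sum>p\<in>P. w p * gsc g s (x - p)) + c0 * gsc g S (x - \<mu>0))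
      = (\<lambda>x. \<Sum>i<m. c i / \<sigma> i ^ DIM('a) * g ((x - \<mu> i) /\<^sub>R \<sigma> i))"
  proof
    fix x
    have "(\<Sum>i<m. c i / \<sigma> i ^ DIM('a) * g ((x - \<mu> i) /\<^sub>R \<sigma> i))
       = (\<Sum>i<?n. c i / \<sigma> i ^ DIM('a) * g ((x - \<mu> i) /\<^sub>R \<sigma> i)) + c ?n / \<sigma> ?n ^ DIM('a) * g ((x - \<mu> ?n) /\<^sub>R \<sigma> ?n)"
      by (rule split) (simp add: c_def)
    also have "(\<Sum>i<?n. c i / \<sigma> i ^ DIM('a) * g ((x - \<mu> i) /\<^sub>R \<sigma> i)) = (\<Sum>i<?n. w (e i) * gsc g s (x - e i))"
      by (intro sum.cong) (auto simp: c_def \<sigma>_def \<mu>_def gsc_def)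
    also have "\<dots> = (\<Sum>p\<in>P. w p * gsc g s (x - p))" by (rule sumP)
    finally show "(\<Sum>p\<in>P. w p * gsc g s (x - p)) + c0 * gsc g S (x - \<mu>0) = (\<Sum>i<m. c i / \<sigma> i ^ DIM('a) * g ((x - \<mu> i) /\<^sub>R \<sigma> i))"
      by (simp add: c_def \<sigma>_def \<mu>_def gsc_def)
  qed
  show ?thesis unfolding h mixtures_def using pos sc by blast
qed

lemma select_seq:
  fixes E :: "'b \<Rightarrow> ennreal" and M :: "nat \<Rightarrow> 'b set"
  assumes ne: "\<And>m. m \<ge> 1 \<Longrightarrow> M m \<noteq> {}"
    and approx: "\<And>e. e > 0 \<Longrightarrow> \<exists>N. \<forall>m\<ge>N. \<exists>h\<in>M m. E h < ennreal e"
  shows "\<exists>hs. (\<forall>m\<ge>1. hs m \<in> M m) \<and> (\<lambda>m. E (hs m)) \<longlonglongrightarrow> 0"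
proof -
  define d where "d m = (INF h\<in>M m. E h)" for m
  have "\<exists>h\<in>M m. E h \<le> d m + ennreal (1 / (real m + 1))" if m: "m \<ge> 1" for m
  proof (cases "d m < \<infinity>")
    case True
    have "d m < d m + ennreal (1 / (real m + 1))"
    proof -
      obtain r where r: "d m = ennreal r" "r \<ge> 0" using True by (cases "d m" rule: ennreal_cases) auto
      have q: "0 < 1 / (real m + 1)" by simp
      have "ennreal r < ennreal (r + 1 / (real m + 1))" using r(2) q by (intro ennreal_lessI) linarith+
      then show ?thesis using r by (simp add: ennreal_plus[symmetric] del: ennreal_plus)
    qed
    then obtain h where "h \<in> M m" "E h < d m + ennreal (1 / (real m + 1))"
      unfolding d_def by (auto simp: INF_less_iff)
    then show ?thesis by (auto intro: less_imp_le)
  next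
    case False
    then have "d m = top" by (simp add: not_less top_unique)
    then show ?thesis using ne[OF m] by auto
  qed
  then have "\<forall>m. \<exists>h. m \<ge> 1 \<longrightarrow> h \<in> M m \<and> E h \<le> d m + ennreal (1 / (real m + 1))"
    by blast
  then obtain hs where hs0: "\<forall>m. m \<ge> 1 \<longrightarrow> hs m \<in> M m \<and> E (hs m) \<le> d m + ennreal (1 / (real m + 1))"
    by (rule choice[THEN exE]) blast
  then have hs: "\<And>m. m \<ge> 1 \<Longrightarrow> hs m \<in> M m \<and> E (hs m) \<le> d m + ennreal (1 / (real m + 1))"
    by blast
  show ?thesis
  proof (intro exI conjI allI impI)
    show "m \<ge> 1 \<Longrightarrow> hs m \<in> M m" for m using hs by blast
    show "(\<lambda>m. E (hs m)) \<longlonglongrightarrow> 0"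
    proof (rule ennreal_tendsto_0I)
      fix e :: real assume e: "e > 0"
      obtain N where N: "\<And>m. m \<ge> N \<Longrightarrow> \<exists>h\<in>M m. E h < ennreal (e/2)" using approx[of "e/2"] e by auto
      obtain N2 :: nat where N2: "2 / e < N2" using reals_Archimedean2 by blast
      show "eventually (\<lambda>m. E (hs m) < ennreal e) sequentially"
        unfolding eventually_sequentially
      proof (intro exI allI impI)
        fix m assume m: "max (max N N2) 1 \<le> m"
        obtain h where h: "h \<in> M m" "E h < ennreal (e/2)" using N[of m] m by auto
        have "d m \<le> E h" unfolding d_def using h(1) by (rule INF_lower)
        then have dm: "d m < ennreal (e/2)" using h(2) by simp
        have "1 / (real m + 1) < e / 2"
        proof -
          have "2 / e < real m + 1" using N2 m by linarith
          then show ?thesis using e by (simp add: field_simps)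
        qed
        then have "ennreal (1 / (real m + 1)) < ennreal (e/2)" using e by (intro ennreal_lessI) auto
        then have "d m + ennreal (1 / (real m + 1)) < ennreal (e/2 + e/2)"
          using dm by (intro ennreal_add_less2) auto
        then show "E (hs m) < ennreal e" using hs[of m] m by (auto intro: le_less_trans)
      qed
    qed
  qed
qed

lemma gsc_measurable_raw[measurable (raw)]:
  assumes [measurable]: "g \<in> borel_measurable borel" "f \<in> borel_measurable M"
  shows "(\<lambda>x. gsc g s (f x)) \<in> borel_measurable M"
  unfolding gsc_def by measurable

lemma gsc_nonneg:
  assumes "\<And>z. g z \<ge> 0" "s > 0"
  shows "gsc g s z \<ge> 0"
  unfolding gsc_def using assms by simp

lemma nn_integral_gsc_reflect:
  fixes g :: "'a::euclidean_space \<Rightarrow> real"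
  assumes [measurable]: "g \<in> borel_measurable borel" and g0: "\<And>z. g z \<ge> 0" and s: "s > 0"
  shows "(\<integral>\<^sup>+y. ennreal (gsc g s (x - y)) \<partial>lborel) = (\<integral>\<^sup>+z. ennreal (g z) \<partial>lborel)"
proof -
  have "(\<integral>\<^sup>+y. ennreal (gsc g s (x - y)) \<partial>lborel) = (\<integral>\<^sup>+y. ennreal (1 / s ^ DIM('a)) * ennreal (g ((x - y) /\<^sub>R s)) \<partial>lborel)"
    by (intro nn_integral_cong) (use s in \<open>simp add: gsc_def ennreal_mult[symmetric] divide_nonneg_pos g0\<close>)
  also have "\<dots> = ennreal (1 / s ^ DIM('a)) * (\<integral>\<^sup>+y. ennreal (g ((x - y) /\<^sub>R s)) \<partial>lborel)"
    by (rule nn_integral_cmult) simp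
  also have "(\<integral>\<^sup>+y. ennreal (g ((x - y) /\<^sub>R s)) \<partial>lborel) = ennreal (s ^ DIM('a)) * (\<integral>\<^sup>+z. ennreal (g z) \<partial>lborel)"
    by (rule nn_integral_lborel_reflect_scale[where u="\<lambda>z. ennreal (g z)", OF _ s]) simp
  also have "ennreal (1 / s ^ DIM('a)) * (ennreal (s ^ DIM('a)) * (\<integral>\<^sup>+z. ennreal (g z) \<partial>lborel)) = (\<integral>\<^sup>+z. ennreal (g z) \<partial>lborel)"
    using s by (simp add: mult.assoc[symmetric] ennreal_mult[symmetric])
  finally show ?thesis .
qed

lemma abs_integral_le_nn:
  fixes F :: "'b \<Rightarrow> real"
  assumes "integrable M F"
  shows "ennreal \<bar>integral\<^sup>L M F\<bar> \<le> (\<integral>\<^sup>+x. ennreal \<bar>F x\<bar> \<partial>M)"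
  using integral_norm_bound_ennreal[OF assms] by simp

lemma integrable_mult_gsc:
  fixes g \<phi> :: "'a::euclidean_space \<Rightarrow> real"
  assumes [measurable]: "g \<in> borel_measurable borel" "\<phi> \<in> borel_measurable borel"
    and g0: "\<And>z. g z \<ge> 0" and gi: "(\<integral>\<^sup>+z. ennreal (g z) \<partial>lborel) < \<infinity>" and s: "s > 0"
    and phiM: "\<And>y. \<bar>\<phi> y\<bar> \<le> M"
  shows "integrable lborel (\<lambda>y. \<phi> y * gsc g s (x - y))"
proof (rule integrableI_bounded)
  show "(\<lambda>y. \<phi> y * gsc g s (x - y)) \<in> borel_measurable lborel" by simp
  have M0: "M \<ge> 0" using phiM[of x] by simp
  have "(\<integral>\<^sup>+y. ennreal (norm (\<phi> y * gsc g s (x - y))) \<partial>lborel) \<le> (\<integral>\<^sup>+y. ennreal M * ennreal (gsc g s (x - y)) \<partial>lborel)"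
  proof (intro nn_integral_mono)
    fix y
    have "norm (\<phi> y * gsc g s (x - y)) = \<bar>\<phi> y\<bar> * gsc g s (x - y)"
      using gsc_nonneg[of g s "x - y", OF g0 s] by (simp add: abs_mult)
    also have "\<dots> \<le> M * gsc g s (x - y)"
      using gsc_nonneg[of g s "x - y", OF g0 s] phiM by (intro mult_right_mono) auto
    finally show "ennreal (norm (\<phi> y * gsc g s (x - y))) \<le> ennreal M * ennreal (gsc g s (x - y))"
      using M0 gsc_nonneg[of g s "x - y", OF g0 s] by (simp add: ennreal_mult[symmetric] ennreal_leI)
  qed
  also have "\<dots> = ennreal M * (\<integral>\<^sup>+y. ennreal (gsc g s (x - y)) \<partial>lborel)"
    by (rule nn_integral_cmult) simp
  also have "\<dots> = ennreal M * (\<integral>\<^sup>+z. ennreal (g z) \<partial>lborel)"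
    by (simp add: nn_integral_gsc_reflect[OF _ g0 s])
  also have "\<dots> < \<infinity>" using gi by (simp add: ennreal_mult_less_top less_top)
  finally show "(\<integral>\<^sup>+y. ennreal (norm (\<phi> y * gsc g s (x - y))) \<partial>lborel) < \<infinity>" .
qed

lemma rep_vimage_sets[measurable]: "rep d -` {p} \<in> sets borel"
  using measurable_sets[OF rep_measurable, of "{p}" d] by simp

lemma integrable_phi_ind:
  fixes \<phi> :: "'a::euclidean_space \<Rightarrow> real"
  assumes "integrable lborel \<phi>"
  shows "integrable lborel (\<lambda>y. \<phi> y * indicator (rep d -` {p}) y)"
proof -
  have "integrable lborel (\<lambda>y. indicator (rep d -` {p}) y *\<^sub>R \<phi> y)"
    by (rule integrable_mult_indicator) (use assms in auto)
  then show ?thesis by (simp add: mult.commute)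
qed

lemma sum_rep_ind:
  fixes \<phi> :: "'a::euclidean_space \<Rightarrow> real" and F :: "'a \<Rightarrow> real"
  assumes fin: "finite (rep d ` Q)" and phiQ: "\<And>y. y \<notin> Q \<Longrightarrow> \<phi> y = 0"
  shows "(\<Sum>p\<in>rep d ` Q. \<phi> y * indicator (rep d -` {p}) y * F p) = \<phi> y * F (rep d y)"
proof (cases "y \<in> Q")
  case True
  have "(\<Sum>p\<in>rep d ` Q. \<phi> y * indicator (rep d -` {p}) y * F p) = (\<Sum>p\<in>rep d ` Q. if rep d y = p then \<phi> y * F p else 0)"
    by (intro sum.cong) (auto simp: indicator_def)
  also have "\<dots> = \<phi> y * F (rep d y)" using fin True by (simp add: sum.delta)
  finally show ?thesis .
next
  case False then show ?thesis using phiQ by simp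
qed

lemma weights_sum:
  fixes \<phi> :: "'a::euclidean_space \<Rightarrow> real"
  assumes Q: "bounded Q" and d: "d > 0" and phiQ: "\<And>y. y \<notin> Q \<Longrightarrow> \<phi> y = 0" and phii: "integrable lborel \<phi>"
  shows "(\<Sum>p\<in>rep d ` Q. (\<integral>y. \<phi> y * indicator (rep d -` {p}) y \<partial>lborel)) = (\<integral>y. \<phi> y \<partial>lborel)"
proof -
  have fin: "finite (rep d ` Q)" by (rule rep_finite[OF Q d])
  have "(\<Sum>p\<in>rep d ` Q. (\<integral>y. \<phi> y * indicator (rep d -` {p}) y \<partial>lborel))
      = (\<integral>y. (\<Sum>p\<in>rep d ` Q. \<phi> y * indicator (rep d -` {p}) y) \<partial>lborel)"
    by (rule Bochner_Integration.integral_sum[symmetric]) (rule integrable_phi_ind[OF phii])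
  also have "\<dots> = (\<integral>y. \<phi> y \<partial>lborel)"
    using sum_rep_ind[where d=d and Q=Q and \<phi>=\<phi>, OF fin phiQ, where F="\<lambda>_. 1"] by simp
  finally show ?thesis .
qed

lemma riemann_pointwise:
  fixes g \<phi> :: "'a::euclidean_space \<Rightarrow> real" and Q :: "'a set" and d s M :: real
  assumes [measurable]: "g \<in> borel_measurable borel" "\<phi> \<in> borel_measurable borel"
    and g0: "\<And>z. g z \<ge> 0" and gi: "(\<integral>\<^sup>+z. ennreal (g z) \<partial>lborel) < \<infinity>" and s: "s > 0" and d: "d > 0"
    and phiM: "\<And>y. \<bar>\<phi> y\<bar> \<le> M" and phiQ: "\<And>y. y \<notin> Q \<Longrightarrow> \<phi> y = 0" and Q: "bounded Q"
    and phii: "integrable lborel \<phi>"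
  shows "ennreal \<bar>(\<Sum>p\<in>rep d ` Q. (\<integral>y. \<phi> y * indicator (rep d -` {p}) y \<partial>lborel) * gsc g s (x - p))
            - (\<integral>y. \<phi> y * gsc g s (x - y) \<partial>lborel)\<bar>
         \<le> (\<integral>\<^sup>+y. ennreal (\<bar>\<phi> y\<bar> * \<bar>gsc g s (x - rep d y) - gsc g s (x - y)\<bar>) \<partial>lborel)"
proof -
  have fin: "finite (rep d ` Q)" by (rule rep_finite[OF Q d])
  let ?G = "gsc g s"
  have ip: "integrable lborel (\<lambda>y. \<phi> y * indicator (rep d -` {p}) y * ?G (x - p))" for p
    using integrable_phi_ind[OF phii] by simp
  have "(\<Sum>p\<in>rep d ` Q. (\<integral>y. \<phi> y * indicator (rep d -` {p}) y \<partial>lborel) * ?G (x - p))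
      = (\<Sum>p\<in>rep d ` Q. (\<integral>y. \<phi> y * indicator (rep d -` {p}) y * ?G (x - p) \<partial>lborel))"
    by simp
  also have "\<dots> = (\<integral>y. (\<Sum>p\<in>rep d ` Q. \<phi> y * indicator (rep d -` {p}) y * ?G (x - p)) \<partial>lborel)"
    by (rule Bochner_Integration.integral_sum[symmetric]) (rule ip)
  also have "\<dots> = (\<integral>y. \<phi> y * ?G (x - rep d y) \<partial>lborel)"
    using sum_rep_ind[where d=d and Q=Q and \<phi>=\<phi>, OF fin phiQ, where F="\<lambda>p. ?G (x - p)"] by simp
  finally have eq1: "(\<Sum>p\<in>rep d ` Q. (\<integral>y. \<phi> y * indicator (rep d -` {p}) y \<partial>lborel) * ?G (x - p))
      = (\<integral>y. \<phi> y * ?G (x - rep d y) \<partial>lborel)" .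
  have i1: "integrable lborel (\<lambda>y. \<phi> y * ?G (x - rep d y))"
  proof -
    have "integrable lborel (\<lambda>y. \<Sum>p\<in>rep d ` Q. \<phi> y * indicator (rep d -` {p}) y * ?G (x - p))"
      using ip by (intro Bochner_Integration.integrable_sum) auto
    then show ?thesis using sum_rep_ind[where d=d and Q=Q and \<phi>=\<phi>, OF fin phiQ, where F="\<lambda>p. ?G (x - p)"] by simp
  qed
  have i2: "integrable lborel (\<lambda>y. \<phi> y * ?G (x - y))"
    by (rule integrable_mult_gsc[OF _ _ g0 gi s phiM]) simp_all
  have "(\<Sum>p\<in>rep d ` Q. (\<integral>y. \<phi> y * indicator (rep d -` {p}) y \<partial>lborel) * ?G (x - p))
            - (\<integral>y. \<phi> y * ?G (x - y) \<partial>lborel) = (\<integral>y. \<phi> y * ?G (x - rep d y) - \<phi> y * ?G (x - y) \<partial>lborel)"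
    unfolding eq1 using i1 i2 by simp
  also have "ennreal \<bar>\<dots>\<bar> \<le> (\<integral>\<^sup>+y. ennreal \<bar>\<phi> y * ?G (x - rep d y) - \<phi> y * ?G (x - y)\<bar> \<partial>lborel)"
    by (rule abs_integral_le_nn) (use i1 i2 in simp)
  also have "\<dots> = (\<integral>\<^sup>+y. ennreal (\<bar>\<phi> y\<bar> * \<bar>?G (x - rep d y) - ?G (x - y)\<bar>) \<partial>lborel)"
    by (intro nn_integral_cong) (simp add: abs_mult right_diff_distrib[symmetric])
  finally show ?thesis .
qed

lemma inner_shift_integral:
  fixes g :: "'a::euclidean_space \<Rightarrow> real"
  assumes [measurable]: "g \<in> borel_measurable borel" and s: "s > 0"
  shows "(\<integral>\<^sup>+x. ennreal \<bar>gsc g s (x - a) - gsc g s (x - y)\<bar> \<partial>lborel)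
       = (\<integral>\<^sup>+w. ennreal \<bar>g (w + (y - a) /\<^sub>R s) - g w\<bar> \<partial>lborel)"
proof -
  have "(\<integral>\<^sup>+x. ennreal \<bar>gsc g s (x - a) - gsc g s (x - y)\<bar> \<partial>lborel)
     = ennreal (\<bar>s\<bar>^DIM('a)) * (\<integral>\<^sup>+w. ennreal \<bar>gsc g s (y + s *\<^sub>R w - a) - gsc g s (y + s *\<^sub>R w - y)\<bar> \<partial>lborel)"
    by (rule nn_integral_lborel_affine) (use s in auto)
  also have "(\<lambda>w. ennreal \<bar>gsc g s (y + s *\<^sub>R w - a) - gsc g s (y + s *\<^sub>R w - y)\<bar>)
       = (\<lambda>w. ennreal (1 / s^DIM('a)) * ennreal \<bar>g (w + (y - a) /\<^sub>R s) - g w\<bar>)"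
  proof
    fix w
    have e1: "(y + s *\<^sub>R w - a) /\<^sub>R s = w + (y - a) /\<^sub>R s" using s by (simp add: algebra_simps)
    have e2: "(y + s *\<^sub>R w - y) /\<^sub>R s = w" using s by simp
    have "\<bar>gsc g s (y + s *\<^sub>R w - a) - gsc g s (y + s *\<^sub>R w - y)\<bar> = (1 / s^DIM('a)) * \<bar>g (w + (y - a) /\<^sub>R s) - g w\<bar>"
      unfolding gsc_def e1 e2 using s by (simp add: abs_divide diff_divide_distrib[symmetric])
    then show "ennreal \<bar>gsc g s (y + s *\<^sub>R w - a) - gsc g s (y + s *\<^sub>R w - y)\<bar> = ennreal (1 / s^DIM('a)) * ennreal \<bar>g (w + (y - a) /\<^sub>R s) - g w\<bar>"
      using s by (simp add: ennreal_mult[symmetric])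
  qed
  also have "(\<integral>\<^sup>+w. ennreal (1 / s^DIM('a)) * ennreal \<bar>g (w + (y - a) /\<^sub>R s) - g w\<bar> \<partial>lborel)
       = ennreal (1 / s^DIM('a)) * (\<integral>\<^sup>+w. ennreal \<bar>g (w + (y - a) /\<^sub>R s) - g w\<bar> \<partial>lborel)"
    by (rule nn_integral_cmult) simp
  also have "ennreal (\<bar>s\<bar>^DIM('a)) * (ennreal (1 / s^DIM('a)) * (\<integral>\<^sup>+w. ennreal \<bar>g (w + (y - a) /\<^sub>R s) - g w\<bar> \<partial>lborel))
       = (\<integral>\<^sup>+w. ennreal \<bar>g (w + (y - a) /\<^sub>R s) - g w\<bar> \<partial>lborel)"
    using s by (simp add: mult.assoc[symmetric] ennreal_mult[symmetric])
  finally show ?thesis .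
qed

lemma riemann_L1:
  fixes g \<phi> :: "'a::euclidean_space \<Rightarrow> real" and Q :: "'a set" and d s M D \<eta> :: real
  assumes [measurable]: "g \<in> borel_measurable borel" "\<phi> \<in> borel_measurable borel"
    and g0: "\<And>z. g z \<ge> 0" and gi: "(\<integral>\<^sup>+z. ennreal (g z) \<partial>lborel) < \<infinity>" and s: "s > 0" and d: "d > 0"
    and phiM: "\<And>y. \<bar>\<phi> y\<bar> \<le> M" and phiQ: "\<And>y. y \<notin> Q \<Longrightarrow> \<phi> y = 0" and Q: "bounded Q"
    and phii: "integrable lborel \<phi>"
    and tg: "\<And>t. norm t \<le> D \<Longrightarrow> (\<integral>\<^sup>+w. ennreal \<bar>g (w + t) - g w\<bar> \<partial>lborel) \<le> ennreal \<eta>"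
    and dD: "DIM('a) * d / s \<le> D"
  shows "(\<integral>\<^sup>+x. ennreal \<bar>(\<Sum>p\<in>rep d ` Q. (\<integral>y. \<phi> y * indicator (rep d -` {p}) y \<partial>lborel) * gsc g s (x - p))
            - (\<integral>y. \<phi> y * gsc g s (x - y) \<partial>lborel)\<bar> \<partial>lborel)
         \<le> ennreal \<eta> * (\<integral>\<^sup>+y. ennreal \<bar>\<phi> y\<bar> \<partial>lborel)"
proof -
  let ?G = "gsc g s"
  have "(\<integral>\<^sup>+x. ennreal \<bar>(\<Sum>p\<in>rep d ` Q. (\<integral>y. \<phi> y * indicator (rep d -` {p}) y \<partial>lborel) * gsc g s (x - p))
            - (\<integral>y. \<phi> y * gsc g s (x - y) \<partial>lborel)\<bar> \<partial>lborel)
     \<le> (\<integral>\<^sup>+x. (\<integral>\<^sup>+y. ennreal (\<bar>\<phi> y\<bar> * \<bar>?G (x - rep d y) - ?G (x - y)\<bar>) \<partial>lborel) \<partial>lborel)"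
    by (intro nn_integral_mono riemann_pointwise[OF _ _ g0 gi s d phiM phiQ Q phii]) simp_all
  also have "\<dots> = (\<integral>\<^sup>+y. (\<integral>\<^sup>+x. ennreal (\<bar>\<phi> y\<bar> * \<bar>?G (x - rep d y) - ?G (x - y)\<bar>) \<partial>lborel) \<partial>lborel)"
    by (rule lborel_pair.Fubini'[symmetric]) measurable
  also have "\<dots> = (\<integral>\<^sup>+y. ennreal \<bar>\<phi> y\<bar> * (\<integral>\<^sup>+x. ennreal \<bar>?G (x - rep d y) - ?G (x - y)\<bar> \<partial>lborel) \<partial>lborel)"
    by (intro nn_integral_cong, subst nn_integral_cmult[symmetric]) (auto simp: ennreal_mult)
  also have "\<dots> \<le> (\<integral>\<^sup>+y. ennreal \<bar>\<phi> y\<bar> * ennreal \<eta> \<partial>lborel)"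
  proof (intro nn_integral_mono mult_left_mono)
    fix y :: 'a
    have "norm ((y - rep d y) /\<^sub>R s) = norm (y - rep d y) / s" using s by (simp add: divide_inverse_commute)
    also have "\<dots> \<le> DIM('a) * d / s" using rep_dist[OF d, of y] s by (intro divide_right_mono) auto
    also have "\<dots> \<le> D" by (rule dD)
    finally have nD: "norm ((y - rep d y) /\<^sub>R s) \<le> D" .
    show "(\<integral>\<^sup>+x. ennreal \<bar>?G (x - rep d y) - ?G (x - y)\<bar> \<partial>lborel) \<le> ennreal \<eta>"
      using tg[OF nD] inner_shift_integral[of g s "rep d y" y] s by simp
  qed simp
  also have "\<dots> = ennreal \<eta> * (\<integral>\<^sup>+y. ennreal \<bar>\<phi> y\<bar> \<partial>lborel)"
    by (subst nn_integral_multc) (auto simp: mult.commute)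
  finally show ?thesis .
qed

lemma tcs_delta:
  fixes u :: "'a::euclidean_space \<Rightarrow> real"
  assumes "tcs u" "e > 0"
  shows "\<exists>\<delta>>0. \<forall>t. norm t < \<delta> \<longrightarrow> (\<integral>\<^sup>+x. ennreal \<bar>u (x + t) - u x\<bar> \<partial>lborel) < ennreal e"
proof (rule ccontr)
  assume "\<not> ?thesis"
  then have "\<forall>k::nat. \<exists>t. norm t < 1 / (real k + 1) \<and> \<not> (\<integral>\<^sup>+x. ennreal \<bar>u (x + t) - u x\<bar> \<partial>lborel) < ennreal e"
    by (metis divide_pos_pos of_nat_0_le_iff zero_less_one add_nonneg_pos)
  then obtain X where X: "\<And>k. norm (X k) < 1 / (real k + 1)"
    and Xe: "\<And>k. \<not> (\<integral>\<^sup>+x. ennreal \<bar>u (x + X k) - u x\<bar> \<partial>lborel) < ennreal e"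
    by metis
  have "X \<longlonglongrightarrow> 0"
  proof (rule tendsto_norm_zero_cancel, rule tendsto_sandwich[of "\<lambda>_. 0" _ _ "\<lambda>k. 1 / (real k + 1)"])
    show "eventually (\<lambda>k. 0 \<le> norm (X k)) sequentially" by simp
    show "eventually (\<lambda>k. norm (X k) \<le> 1 / (real k + 1)) sequentially" using X by (simp add: less_imp_le)
    show "(\<lambda>k. 1 / (real k + 1)) \<longlonglongrightarrow> 0" using LIMSEQ_inverse_real_of_nat by (simp add: inverse_eq_divide add.commute)
  qed simp
  then have "(\<lambda>k. \<integral>\<^sup>+x. ennreal \<bar>u (x + X k) - u x\<bar> \<partial>lborel) \<longlonglongrightarrow> 0" using assms(1) by (simp add: tcs_def)
  from ennreal_tendsto_0D[OF this assms(2)] Xe show False by auto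
qed

lemma tail_small:
  fixes g :: "'a::euclidean_space \<Rightarrow> real"
  assumes [measurable]: "g \<in> borel_measurable borel" and g0: "\<And>z. g z \<ge> 0"
    and gi: "(\<integral>\<^sup>+z. ennreal (g z) \<partial>lborel) < \<infinity>" and e: "e > 0"
  shows "\<exists>T. (\<integral>\<^sup>+z. ennreal (g z) * indicator {z. norm z > T} z \<partial>lborel) < ennreal e"
proof -
  have "(\<lambda>k::nat. \<integral>\<^sup>+z. ennreal (g z) * indicator {z. norm z > real k} z \<partial>lborel) \<longlonglongrightarrow> (\<integral>\<^sup>+z. 0 \<partial>(lborel::'a measure))"
  proof (rule nn_integral_dominated_convergence[where w="\<lambda>z. ennreal (g z)"])
    show "AE z in lborel. ennreal (g z) * indicator {z. norm z > real k} z \<le> ennreal (g z)" for k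
      by (auto simp: indicator_def)
    show "AE z in lborel. (\<lambda>k. ennreal (g z) * indicator {z. norm z > real k} z) \<longlonglongrightarrow> 0"
    proof (rule AE_I2)
      fix z :: 'a
      obtain N :: nat where "norm z < N" using reals_Archimedean2 by blast
      then have "eventually (\<lambda>k. ennreal (g z) * indicator {z. norm z > real k} z = 0) sequentially"
        unfolding eventually_sequentially by (intro exI[of _ N]) (auto simp: indicator_def)
      then show "(\<lambda>k. ennreal (g z) * indicator {z. norm z > real k} z) \<longlonglongrightarrow> 0"
        by (rule tendsto_eventually)
    qed
  qed (use gi in auto)
  then have "(\<lambda>k::nat. \<integral>\<^sup>+z. ennreal (g z) * indicator {z. norm z > real k} z \<partial>lborel) \<longlonglongrightarrow> 0" by simp
  from ennreal_tendsto_0D[OF this e] obtain k where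
    "(\<integral>\<^sup>+z. ennreal (g z) * indicator {z. norm z > real k} z \<partial>lborel) < ennreal e"
    by (auto simp: eventually_sequentially)
  then show ?thesis by blast
qed

lemma integral_gsc_one:
  fixes g :: "'a::euclidean_space \<Rightarrow> real"
  assumes [measurable]: "g \<in> borel_measurable borel" and g0: "\<And>z. g z \<ge> 0"
    and g1: "(\<integral>\<^sup>+z. ennreal (g z) \<partial>lborel) = 1" and s: "s > 0"
  shows "integrable lborel (\<lambda>y. gsc g s (x - y))" "(\<integral>y. gsc g s (x - y) \<partial>lborel) = 1"
proof -
  have nn: "(\<integral>\<^sup>+y. ennreal (gsc g s (x - y)) \<partial>lborel) = 1"
    using nn_integral_gsc_reflect[OF _ g0 s, where x=x] g1 by simp
  show int: "integrable lborel (\<lambda>y. gsc g s (x - y))"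
  proof (rule integrableI_bounded)
    show "(\<integral>\<^sup>+y. ennreal (norm (gsc g s (x - y))) \<partial>lborel) < \<infinity>"
      using nn gsc_nonneg[of g s, OF g0 s] by simp
  qed simp
  have "(\<integral>\<^sup>+y. ennreal (gsc g s (x - y)) \<partial>lborel) = ennreal (\<integral>y. gsc g s (x - y) \<partial>lborel)"
    by (rule nn_integral_eq_integral[OF int]) (simp add: gsc_nonneg[of g s, OF g0 s])
  then show "(\<integral>y. gsc g s (x - y) \<partial>lborel) = 1" using nn
    by (metis ennreal_1 ennreal_inj integral_nonneg_AE AE_I2 gsc_nonneg[of g s, OF g0 s] zero_le_one)
qed

lemma conv_diff_pointwise:
  fixes g \<phi> :: "'a::euclidean_space \<Rightarrow> real"
  assumes [measurable]: "g \<in> borel_measurable borel" "\<phi> \<in> borel_measurable borel"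
    and g0: "\<And>z. g z \<ge> 0" and g1: "(\<integral>\<^sup>+z. ennreal (g z) \<partial>lborel) = 1" and s: "s > 0"
    and phiM: "\<And>y. \<bar>\<phi> y\<bar> \<le> M"
  shows "ennreal \<bar>(\<integral>y. \<phi> y * gsc g s (x - y) \<partial>lborel) - c\<bar> \<le> (\<integral>\<^sup>+z. ennreal (\<bar>\<phi> (x - s *\<^sub>R z) - c\<bar> * g z) \<partial>lborel)"
proof -
  let ?G = "gsc g s"
  have gi: "(\<integral>\<^sup>+z. ennreal (g z) \<partial>lborel) < \<infinity>" using g1 by simp
  have i1: "integrable lborel (\<lambda>y. \<phi> y * ?G (x - y))"
    by (rule integrable_mult_gsc[OF _ _ g0 gi s phiM]) simp_all
  have i2: "integrable lborel (\<lambda>y. c * ?G (x - y))"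
    using integral_gsc_one(1)[OF _ g0 g1 s, where x=x] by simp
  have "(\<integral>y. \<phi> y * ?G (x - y) \<partial>lborel) - c = (\<integral>y. \<phi> y * ?G (x - y) \<partial>lborel) - (\<integral>y. c * ?G (x - y) \<partial>lborel)"
    using integral_gsc_one(2)[OF _ g0 g1 s, where x=x] by simp
  also have "\<dots> = (\<integral>y. \<phi> y * ?G (x - y) - c * ?G (x - y) \<partial>lborel)"
    using i1 i2 by simp
  finally have eq: "(\<integral>y. \<phi> y * ?G (x - y) \<partial>lborel) - c = (\<integral>y. \<phi> y * ?G (x - y) - c * ?G (x - y) \<partial>lborel)" .
  have "ennreal \<bar>(\<integral>y. \<phi> y * ?G (x - y) \<partial>lborel) - c\<bar> \<le> (\<integral>\<^sup>+y. ennreal \<bar>\<phi> y * ?G (x - y) - c * ?G (x - y)\<bar> \<partial>lborel)"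
    unfolding eq by (rule abs_integral_le_nn) (use i1 i2 in simp)
  also have "\<dots> = (\<integral>\<^sup>+y. ennreal (\<bar>\<phi> y - c\<bar> * ?G (x - y)) \<partial>lborel)"
    by (intro nn_integral_cong) (simp add: abs_mult left_diff_distrib[symmetric] gsc_nonneg[of g s, OF g0 s])
  also have "\<dots> = ennreal (\<bar>-s\<bar>^DIM('a)) * (\<integral>\<^sup>+z. ennreal (\<bar>\<phi> (x + (-s) *\<^sub>R z) - c\<bar> * ?G (x - (x + (-s) *\<^sub>R z))) \<partial>lborel)"
    by (rule nn_integral_lborel_affine) (use s in auto)
  also have "(\<lambda>z. ennreal (\<bar>\<phi> (x + (-s) *\<^sub>R z) - c\<bar> * ?G (x - (x + (-s) *\<^sub>R z))))
      = (\<lambda>z. ennreal (1 / s^DIM('a)) * ennreal (\<bar>\<phi> (x - s *\<^sub>R z) - c\<bar> * g z))"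
  proof
    fix z
    have "\<bar>\<phi> (x + (-s) *\<^sub>R z) - c\<bar> * ?G (x - (x + (-s) *\<^sub>R z)) = (1 / s^DIM('a)) * (\<bar>\<phi> (x - s *\<^sub>R z) - c\<bar> * g z)"
      using s by (simp add: gsc_def)
    then show "ennreal (\<bar>\<phi> (x + (-s) *\<^sub>R z) - c\<bar> * ?G (x - (x + (-s) *\<^sub>R z))) = ennreal (1 / s^DIM('a)) * ennreal (\<bar>\<phi> (x - s *\<^sub>R z) - c\<bar> * g z)"
      using s g0[of z] by (simp add: ennreal_mult[symmetric])
  qed
  also have "ennreal (\<bar>-s\<bar>^DIM('a)) * (\<integral>\<^sup>+z. ennreal (1 / s^DIM('a)) * ennreal (\<bar>\<phi> (x - s *\<^sub>R z) - c\<bar> * g z) \<partial>lborel)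
      = (\<integral>\<^sup>+z. ennreal (\<bar>\<phi> (x - s *\<^sub>R z) - c\<bar> * g z) \<partial>lborel)"
    using s by (subst nn_integral_cmult) (auto simp: mult.assoc[symmetric] ennreal_mult[symmetric])
  finally show ?thesis .
qed

lemma shift_diff_bound:
  fixes u :: "'a::euclidean_space \<Rightarrow> real"
  assumes [measurable]: "u \<in> borel_measurable borel"
  shows "(\<integral>\<^sup>+x. ennreal \<bar>u (x + t) - u x\<bar> \<partial>lborel) \<le> 2 * (\<integral>\<^sup>+x. ennreal \<bar>u x\<bar> \<partial>lborel)"
proof -
  have "(\<integral>\<^sup>+x. ennreal \<bar>u (x + t) - u x\<bar> \<partial>lborel) \<le> (\<integral>\<^sup>+x. ennreal \<bar>u (x + t)\<bar> + ennreal \<bar>u x\<bar> \<partial>lborel)"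
    by (intro nn_integral_mono) (simp add: ennreal_plus[symmetric] del: ennreal_plus)
  also have "\<dots> = (\<integral>\<^sup>+x. ennreal \<bar>u (x + t)\<bar> \<partial>lborel) + (\<integral>\<^sup>+x. ennreal \<bar>u x\<bar> \<partial>lborel)"
    by (rule nn_integral_add) auto
  also have "(\<integral>\<^sup>+x. ennreal \<bar>u (x + t)\<bar> \<partial>lborel) = (\<integral>\<^sup>+x. ennreal \<bar>u x\<bar> \<partial>lborel)"
    by (rule nn_integral_lborel_translate[where u="\<lambda>x. ennreal \<bar>u x\<bar>"]) simp
  finally show ?thesis by (simp add: mult_2)
qed

lemma conv_L1:
  fixes g \<phi> :: "'a::euclidean_space \<Rightarrow> real"
  assumes [measurable]: "g \<in> borel_measurable borel" "\<phi> \<in> borel_measurable borel"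
    and g0: "\<And>z. g z \<ge> 0" and g1: "(\<integral>\<^sup>+z. ennreal (g z) \<partial>lborel) = 1"
    and phiM: "\<And>y. \<bar>\<phi> y\<bar> \<le> M" and phii: "integrable lborel \<phi>" and eta: "\<eta> > 0"
  shows "\<exists>s0>0. \<forall>s. 0 < s \<and> s \<le> s0 \<longrightarrow>
          (\<integral>\<^sup>+x. ennreal \<bar>(\<integral>y. \<phi> y * gsc g s (x - y) \<partial>lborel) - \<phi> x\<bar> \<partial>lborel) < ennreal \<eta>"
proof -
  have gi: "(\<integral>\<^sup>+z. ennreal (g z) \<partial>lborel) < \<infinity>" using g1 by simp
  obtain a where a: "(\<integral>\<^sup>+x. ennreal \<bar>\<phi> x\<bar> \<partial>lborel) = ennreal a" "a \<ge> 0"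
  proof -
    have "(\<integral>\<^sup>+x. ennreal \<bar>\<phi> x\<bar> \<partial>lborel) = ennreal (\<integral>x. \<bar>\<phi> x\<bar> \<partial>lborel)"
      by (rule nn_integral_eq_integral) (use phii in auto)
    then show ?thesis using that by auto
  qed
  have tc: "tcs \<phi>" by (rule tcs_integrable[OF phii])
  obtain \<delta> where \<delta>: "\<delta> > 0" "\<And>t. norm t < \<delta> \<Longrightarrow> (\<integral>\<^sup>+x. ennreal \<bar>\<phi> (x + t) - \<phi> x\<bar> \<partial>lborel) < ennreal (\<eta>/3)"
    using tcs_delta[OF tc, of "\<eta>/3"] eta by auto
  obtain T0 where T0: "(\<integral>\<^sup>+z. ennreal (g z) * indicator {z. norm z > T0} z \<partial>lborel) < ennreal (\<eta> / (3 * (2 * a + 1)))"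
    using tail_small[OF _ g0 gi, of "\<eta> / (3 * (2 * a + 1))"] eta a(2) by auto
  define T where "T = max T0 0"
  have T: "T \<ge> 0" unfolding T_def by simp
  have tail: "(\<integral>\<^sup>+z. ennreal (g z) * indicator {z. norm z > T} z \<partial>lborel) < ennreal (\<eta> / (3 * (2 * a + 1)))"
  proof -
    have "(\<integral>\<^sup>+z. ennreal (g z) * indicator {z. norm z > T} z \<partial>lborel) \<le> (\<integral>\<^sup>+z. ennreal (g z) * indicator {z. norm z > T0} z \<partial>lborel)"
      by (intro nn_integral_mono) (auto simp: T_def indicator_def)
    then show ?thesis using T0 by simp
  qed
  define s0 where "s0 = \<delta> / (T + 1)"
  have s0: "s0 > 0" unfolding s0_def using \<delta> T by simp
  show ?thesis
  proof (intro exI[of _ s0] conjI allI impI s0)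
    fix s assume s: "0 < s \<and> s \<le> s0"
    then have s: "s > 0" "s \<le> s0" by auto
    let ?tau = "\<lambda>t. (\<integral>\<^sup>+x. ennreal \<bar>\<phi> (x + t) - \<phi> x\<bar> \<partial>lborel)"
    have "(\<integral>\<^sup>+x. ennreal \<bar>(\<integral>y. \<phi> y * gsc g s (x - y) \<partial>lborel) - \<phi> x\<bar> \<partial>lborel)
       \<le> (\<integral>\<^sup>+x. (\<integral>\<^sup>+z. ennreal (\<bar>\<phi> (x - s *\<^sub>R z) - \<phi> x\<bar> * g z) \<partial>lborel) \<partial>lborel)"
      by (intro nn_integral_mono conv_diff_pointwise[OF _ _ g0 g1 s(1) phiM]) simp_all
    also have "\<dots> = (\<integral>\<^sup>+z. (\<integral>\<^sup>+x. ennreal (\<bar>\<phi> (x - s *\<^sub>R z) - \<phi> x\<bar> * g z) \<partial>lborel) \<partial>lborel)"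
      by (rule lborel_pair.Fubini'[symmetric]) measurable
    also have "\<dots> = (\<integral>\<^sup>+z. ennreal (g z) * ?tau (- (s *\<^sub>R z)) \<partial>lborel)"
    proof (intro nn_integral_cong)
      fix z
      have "(\<integral>\<^sup>+x. ennreal (\<bar>\<phi> (x - s *\<^sub>R z) - \<phi> x\<bar> * g z) \<partial>lborel) = (\<integral>\<^sup>+x. ennreal (g z) * ennreal \<bar>\<phi> (x + - (s *\<^sub>R z)) - \<phi> x\<bar> \<partial>lborel)"
        by (intro nn_integral_cong) (simp add: ennreal_mult[symmetric] g0 mult.commute)
      also have "\<dots> = ennreal (g z) * ?tau (- (s *\<^sub>R z))"
        by (rule nn_integral_cmult) simp
      finally show "(\<integral>\<^sup>+x. ennreal (\<bar>\<phi> (x - s *\<^sub>R z) - \<phi> x\<bar> * g z) \<partial>lborel) = ennreal (g z) * ?tau (- (s *\<^sub>R z))" .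
    qed
    also have "\<dots> \<le> (\<integral>\<^sup>+z. ennreal (\<eta>/3) * ennreal (g z) + ennreal (2 * a) * (ennreal (g z) * indicator {z. norm z > T} z) \<partial>lborel)"
    proof (intro nn_integral_mono)
      fix z :: 'a
      show "ennreal (g z) * ?tau (- (s *\<^sub>R z)) \<le> ennreal (\<eta>/3) * ennreal (g z) + ennreal (2 * a) * (ennreal (g z) * indicator {z. norm z > T} z)"
      proof (cases "norm z > T")
        case True
        have "?tau (- (s *\<^sub>R z)) \<le> 2 * ennreal a" using shift_diff_bound[of \<phi> "- (s *\<^sub>R z)"] a by simp
        then have "ennreal (g z) * ?tau (- (s *\<^sub>R z)) \<le> ennreal (g z) * (2 * ennreal a)" by (rule mult_left_mono) simp
        also have "\<dots> = ennreal (2 * a) * (ennreal (g z) * indicator {z. norm z > T} z)"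
          using True a(2) by (simp add: ennreal_mult mult_ac)
        finally show ?thesis by (simp add: add_increasing)
      next
        case False
        have "norm (- (s *\<^sub>R z)) = s * norm z" using s by simp
        also have "\<dots> \<le> s0 * T" using s False T by (intro mult_mono) auto
        also have "\<dots> < \<delta>" unfolding s0_def using \<delta> T by (simp add: field_simps)
        finally have "?tau (- (s *\<^sub>R z)) < ennreal (\<eta>/3)" by (rule \<delta>(2))
        then have "ennreal (g z) * ?tau (- (s *\<^sub>R z)) \<le> ennreal (g z) * ennreal (\<eta>/3)" by (intro mult_left_mono) auto
        then show ?thesis by (simp add: mult.commute add_increasing2)
      qed
    qed
    also have "\<dots> = ennreal (\<eta>/3) * (\<integral>\<^sup>+z. ennreal (g z) \<partial>lborel) + ennreal (2 * a) * (\<integral>\<^sup>+z. ennreal (g z) * indicator {z. norm z > T} z \<partial>lborel)"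
      by (subst nn_integral_add) (auto simp: nn_integral_cmult)
    also have "\<dots> \<le> ennreal (\<eta>/3) + ennreal (\<eta>/3)"
    proof -
      have "ennreal (2 * a) * (\<integral>\<^sup>+z. ennreal (g z) * indicator {z. norm z > T} z \<partial>lborel)
          \<le> ennreal (2 * a) * ennreal (\<eta> / (3 * (2 * a + 1)))"
        using tail by (intro mult_left_mono) auto
      also have "\<dots> = ennreal (2 * a * (\<eta> / (3 * (2 * a + 1))))"
        by (rule ennreal_mult[symmetric]) (use a(2) eta in auto)
      also have "\<dots> \<le> ennreal (\<eta>/3)"
      proof (rule ennreal_leI)
        have "2 * a * (\<eta> / (3 * (2 * a + 1))) = (\<eta>/3) * (2 * a / (2 * a + 1))" by (simp add: field_simps)
        also have "\<dots> \<le> (\<eta>/3) * 1" using a(2) eta by (intro mult_left_mono) auto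
        finally show "2 * a * (\<eta> / (3 * (2 * a + 1))) \<le> \<eta>/3" by simp
      qed
      finally have "ennreal (2 * a) * (\<integral>\<^sup>+z. ennreal (g z) * indicator {z. norm z > T} z \<partial>lborel) \<le> ennreal (\<eta>/3)" .
      then show ?thesis using g1 by (simp add: add_left_mono)
    qed
    also have "\<dots> < ennreal \<eta>"
    proof -
      have "ennreal (\<eta>/3) + ennreal (\<eta>/3) = ennreal (2 * \<eta> / 3)" using eta by (simp add: ennreal_plus[symmetric] del: ennreal_plus)
      also have "\<dots> < ennreal \<eta>" using eta by (intro ennreal_lessI) auto
      finally show ?thesis .
    qed
    finally show "(\<integral>\<^sup>+x. ennreal \<bar>(\<integral>y. \<phi> y * gsc g s (x - y) \<partial>lborel) - \<phi> x\<bar> \<partial>lborel) < ennreal \<eta>" .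
  qed
qed

lemma pow_le_lin:
  fixes u K p :: real
  assumes u: "0 \<le> u" "u \<le> K" and p: "p \<ge> 1"
  shows "u powr p \<le> K powr (p - 1) * u"
proof (cases "u = 0")
  case True then show ?thesis by simp
next
  case False
  then have u0: "u > 0" using u by simp
  have "u powr p = u powr ((p - 1) + 1)" by simp
  also have "\<dots> = u powr (p - 1) * u powr 1" by (rule powr_add)
  also have "\<dots> = u powr (p - 1) * u" using u0 by simp
  also have "\<dots> \<le> K powr (p - 1) * u"
    using u p by (intro mult_right_mono powr_mono2) auto
  finally show ?thesis .
qed

lemma pow4:
  fixes a b c d p :: real
  assumes p: "p \<ge> 0"
  shows "\<bar>a + b + c + d\<bar> powr p \<le> 4 powr p * (\<bar>a\<bar> powr p + \<bar>b\<bar> powr p + \<bar>c\<bar> powr p + \<bar>d\<bar> powr p)"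
proof -
  define m where "m = max (max \<bar>a\<bar> \<bar>b\<bar>) (max \<bar>c\<bar> \<bar>d\<bar>)"
  have m0: "m \<ge> 0" unfolding m_def by simp
  have "\<bar>a + b + c + d\<bar> \<le> 4 * m" unfolding m_def by linarith
  then have "\<bar>a + b + c + d\<bar> powr p \<le> (4 * m) powr p" using p by (intro powr_mono2) auto
  also have "\<dots> = 4 powr p * m powr p" using m0 by (simp add: powr_mult)
  also have "m powr p \<le> \<bar>a\<bar> powr p + \<bar>b\<bar> powr p + \<bar>c\<bar> powr p + \<bar>d\<bar> powr p"
    unfolding m_def by (auto simp: max_def add_increasing add_increasing2)
  then have "4 powr p * m powr p \<le> 4 powr p * (\<bar>a\<bar> powr p + \<bar>b\<bar> powr p + \<bar>c\<bar> powr p + \<bar>d\<bar> powr p)"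
    by (intro mult_left_mono) auto
  finally show ?thesis .
qed

definition trunc :: "('a::euclidean_space \<Rightarrow> real) \<Rightarrow> nat \<Rightarrow> 'a \<Rightarrow> real" where
  "trunc f k x = min (f x) (real k) * indicator (cball 0 (real k)) x"

lemma trunc_measurable[measurable]:
  assumes [measurable]: "f \<in> borel_measurable borel"
  shows "trunc f k \<in> borel_measurable borel"
proof -
  have [measurable]: "cball (0::'a) (real k) \<in> sets borel" by simp
  show ?thesis unfolding trunc_def by measurable
qed

lemma trunc_bounds:
  assumes "\<And>x. f x \<ge> 0"
  shows "0 \<le> trunc f k x" "trunc f k x \<le> f x" "trunc f k x \<le> real k" "\<bar>trunc f k x\<bar> \<le> real k"
    "x \<notin> cball 0 (real k) \<Longrightarrow> trunc f k x = 0"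
  using assms[of x] by (auto simp: trunc_def indicator_def)

lemma trunc_eventually:
  "eventually (\<lambda>k. trunc f k x = f x) sequentially"
proof -
  obtain N :: nat where N: "max (f x) (norm x) < N" using reals_Archimedean2 by blast
  show ?thesis unfolding eventually_sequentially
    by (intro exI[of _ N]) (use N in \<open>auto simp: trunc_def indicator_def min_def\<close>)
qed

lemma trunc_approx:
  fixes f :: "'a::euclidean_space \<Rightarrow> real"
  assumes [measurable]: "f \<in> borel_measurable borel" and f0: "\<And>x. f x \<ge> 0"
    and f1: "(\<integral>\<^sup>+x. ennreal (f x) \<partial>lborel) < \<infinity>"
    and fp: "(\<integral>\<^sup>+x. ennreal (f x powr p) \<partial>lborel) < \<infinity>" and p: "p \<ge> 1"
    and e1: "\<eta>1 > 0" and e2: "\<eta>2 > 0"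
  shows "\<exists>k::nat. k \<ge> 1 \<and> (\<integral>\<^sup>+x. ennreal (\<bar>f x - trunc f k x\<bar> powr p) \<partial>lborel) < ennreal \<eta>1
            \<and> (\<integral>\<^sup>+x. ennreal (f x - trunc f k x) \<partial>lborel) < ennreal \<eta>2"
proof -
  have l1: "(\<lambda>k. \<integral>\<^sup>+x. ennreal (\<bar>f x - trunc f k x\<bar> powr p) \<partial>lborel) \<longlonglongrightarrow> (\<integral>\<^sup>+x. 0 \<partial>(lborel::'a measure))"
  proof (rule nn_integral_dominated_convergence[where w="\<lambda>x. ennreal (f x powr p)"])
    show "AE x in lborel. ennreal (\<bar>f x - trunc f k x\<bar> powr p) \<le> ennreal (f x powr p)" for k
    proof (rule AE_I2)
      fix x
      have "\<bar>f x - trunc f k x\<bar> \<le> f x" using trunc_bounds[where f=f and k=k and x=x, OF f0] by simp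
      then show "ennreal (\<bar>f x - trunc f k x\<bar> powr p) \<le> ennreal (f x powr p)"
        using p by (intro ennreal_leI powr_mono2) auto
    qed
    show "AE x in lborel. (\<lambda>k. ennreal (\<bar>f x - trunc f k x\<bar> powr p)) \<longlonglongrightarrow> 0"
    proof (rule AE_I2)
      fix x
      have "eventually (\<lambda>k. ennreal (\<bar>f x - trunc f k x\<bar> powr p) = 0) sequentially"
        using trunc_eventually[of f x] by eventually_elim simp
      then show "(\<lambda>k. ennreal (\<bar>f x - trunc f k x\<bar> powr p)) \<longlonglongrightarrow> 0" by (rule tendsto_eventually)
    qed
  qed (use fp in auto)
  have l2: "(\<lambda>k. \<integral>\<^sup>+x. ennreal (f x - trunc f k x) \<partial>lborel) \<longlonglongrightarrow> (\<integral>\<^sup>+x. 0 \<partial>(lborel::'a measure))"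
  proof (rule nn_integral_dominated_convergence[where w="\<lambda>x. ennreal (f x)"])
    show "AE x in lborel. ennreal (f x - trunc f k x) \<le> ennreal (f x)" for k
      using trunc_bounds(1)[where f=f, OF f0] by (auto intro!: ennreal_leI)
    show "AE x in lborel. (\<lambda>k. ennreal (f x - trunc f k x)) \<longlonglongrightarrow> 0"
    proof (rule AE_I2)
      fix x
      have "eventually (\<lambda>k. ennreal (f x - trunc f k x) = 0) sequentially"
        using trunc_eventually[of f x] by eventually_elim simp
      then show "(\<lambda>k. ennreal (f x - trunc f k x)) \<longlonglongrightarrow> 0" by (rule tendsto_eventually)
    qed
  qed (use f1 in auto)
  have ev: "eventually (\<lambda>k. k \<ge> 1 \<and> (\<integral>\<^sup>+x. ennreal (\<bar>f x - trunc f k x\<bar> powr p) \<partial>lborel) < ennreal \<eta>1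
            \<and> (\<integral>\<^sup>+x. ennreal (f x - trunc f k x) \<partial>lborel) < ennreal \<eta>2) sequentially"
    using ennreal_tendsto_0D[OF l1[simplified] e1] ennreal_tendsto_0D[OF l2[simplified] e2]
      eventually_ge_at_top[of "1::nat"]
    by eventually_elim auto
  then show ?thesis by (auto dest: eventually_happens)
qed

lemma int_abs_pow_bound:
  fixes u :: "'a \<Rightarrow> real"
  assumes [measurable]: "u \<in> borel_measurable M" and uK: "\<And>x. \<bar>u x\<bar> \<le> K" and p: "p \<ge> 1"
  shows "(\<integral>\<^sup>+x. ennreal (\<bar>u x\<bar> powr p) \<partial>M) \<le> ennreal (K powr (p - 1)) * (\<integral>\<^sup>+x. ennreal \<bar>u x\<bar> \<partial>M)"
proof -
  have "(\<integral>\<^sup>+x. ennreal (\<bar>u x\<bar> powr p) \<partial>M) \<le> (\<integral>\<^sup>+x. ennreal (K powr (p - 1)) * ennreal \<bar>u x\<bar> \<partial>M)"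
  proof (intro nn_integral_mono)
    fix x
    have "\<bar>u x\<bar> powr p \<le> K powr (p - 1) * \<bar>u x\<bar>" by (rule pow_le_lin[OF _ uK p]) simp
    then show "ennreal (\<bar>u x\<bar> powr p) \<le> ennreal (K powr (p - 1)) * ennreal \<bar>u x\<bar>"
      by (simp add: ennreal_mult[symmetric] ennreal_leI)
  qed
  also have "\<dots> = ennreal (K powr (p - 1)) * (\<integral>\<^sup>+x. ennreal \<bar>u x\<bar> \<partial>M)"
    by (rule nn_integral_cmult) simp
  finally show ?thesis .
qed

lemma conv_measurable[measurable]:
  fixes g \<phi> :: "'a::euclidean_space \<Rightarrow> real"
  assumes [measurable]: "g \<in> borel_measurable borel" "\<phi> \<in> borel_measurable borel"
  shows "(\<lambda>x. \<integral>y. \<phi> y * gsc g s (x - y) \<partial>lborel) \<in> borel_measurable borel"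
proof -
  have "(\<lambda>x. \<integral>y. \<phi> y * gsc g s (x - y) \<partial>lborel) \<in> borel_measurable (lborel::'a measure)"
    by (rule lborel.borel_measurable_lebesgue_integral) measurable
  then show ?thesis by simp
qed

lemma partB_core:
  fixes f g :: "'a::euclidean_space \<Rightarrow> real" and p B \<epsilon> :: real
  assumes [measurable]: "f \<in> borel_measurable borel" "g \<in> borel_measurable borel"
    and f0: "\<And>x. f x \<ge> 0" and f1: "(\<integral>\<^sup>+x. ennreal (f x) \<partial>lborel) = 1"
    and fp: "(\<integral>\<^sup>+x. ennreal (f x powr p) \<partial>lborel) < \<infinity>"
    and g0: "\<And>x. g x \<ge> 0" and g1: "(\<integral>\<^sup>+x. ennreal (g x) \<partial>lborel) = 1" and gB: "\<And>x. g x \<le> B"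
    and p: "p \<ge> 1" and e: "\<epsilon> > 0"
  shows "\<exists>N. \<forall>m\<ge>N. \<exists>h\<in>mixtures g m. (\<integral>\<^sup>+x. ennreal (\<bar>f x - h x\<bar> powr p) \<partial>lborel) < ennreal \<epsilon>"
proof -
  have B0: "B \<ge> 0" using g0[of 0] gB[of 0] by simp
  have gi: "(\<integral>\<^sup>+z. ennreal (g z) \<partial>lborel) < \<infinity>" using g1 by simp
  define \<eta> where "\<eta> = \<epsilon> / (4 * 4 powr p)"
  have \<eta>: "\<eta> > 0" unfolding \<eta>_def using e by simp
  define Bp where "Bp = B powr (p - 1)"
  have Bp: "Bp \<ge> 0" unfolding Bp_def by simp
  obtain k :: nat where k: "k \<ge> 1"
    and kD: "(\<integral>\<^sup>+x. ennreal (\<bar>f x - trunc f k x\<bar> powr p) \<partial>lborel) < ennreal \<eta>"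
    and kC: "(\<integral>\<^sup>+x. ennreal (f x - trunc f k x) \<partial>lborel) < ennreal (\<eta> / (Bp + 1))"
    using trunc_approx[OF _ f0 _ fp p \<eta>, of "\<eta> / (Bp + 1)"] f1 \<eta> Bp by auto
  define \<phi> where "\<phi> = trunc f k"
  define Q where "Q = cball (0::'a) (real k)"
  have [measurable]: "\<phi> \<in> borel_measurable borel" unfolding \<phi>_def by simp
  have \<phi>0: "\<And>x. 0 \<le> \<phi> x" and \<phi>f: "\<And>x. \<phi> x \<le> f x" and \<phi>k: "\<And>x. \<phi> x \<le> real k"
    and \<phi>M: "\<And>x. \<bar>\<phi> x\<bar> \<le> real k" and \<phi>Q: "\<And>x. x \<notin> Q \<Longrightarrow> \<phi> x = 0"
    unfolding \<phi>_def Q_def using trunc_bounds[where f=f, OF f0] by auto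
  have Qb: "bounded Q" unfolding Q_def by simp
  have fi: "integrable lborel f"
    by (rule integrableI_bounded) (use f1 f0 in simp_all)
  have \<phi>i: "integrable lborel \<phi>"
    by (rule Bochner_Integration.integrable_bound[OF fi]) (use \<phi>0 \<phi>f in \<open>auto intro!: AE_I2 order_trans[OF _ abs_ge_self]\<close>)
  have \<phi>nn: "(\<integral>\<^sup>+x. ennreal \<bar>\<phi> x\<bar> \<partial>lborel) \<le> 1"
  proof -
    have "(\<integral>\<^sup>+x. ennreal \<bar>\<phi> x\<bar> \<partial>lborel) \<le> (\<integral>\<^sup>+x. ennreal (f x) \<partial>lborel)"
      by (intro nn_integral_mono ennreal_leI) (use \<phi>0 \<phi>f in auto)
    then show ?thesis using f1 by simp
  qed
  have If: "(\<integral>x. f x \<partial>lborel) = 1"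
  proof -
    have "(\<integral>\<^sup>+x. ennreal (f x) \<partial>lborel) = ennreal (\<integral>x. f x \<partial>lborel)"
      by (rule nn_integral_eq_integral[OF fi]) (simp add: f0)
    then show ?thesis using f1 by (metis ennreal_1 ennreal_inj integral_nonneg_AE AE_I2 f0 zero_le_one)
  qed
  define c0 where "c0 = 1 - (\<integral>x. \<phi> x \<partial>lborel)"
  have c0eq: "ennreal c0 = (\<integral>\<^sup>+x. ennreal (f x - \<phi> x) \<partial>lborel)"
  proof -
    have "(\<integral>\<^sup>+x. ennreal (f x - \<phi> x) \<partial>lborel) = ennreal (\<integral>x. f x - \<phi> x \<partial>lborel)"
      by (rule nn_integral_eq_integral) (use fi \<phi>i \<phi>f in auto)
    also have "(\<integral>x. f x - \<phi> x \<partial>lborel) = c0" unfolding c0_def using fi \<phi>i If by simp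
    finally show ?thesis by simp
  qed
  have c0pos: "c0 \<ge> 0"
  proof -
    have "(\<integral>x. \<phi> x \<partial>lborel) \<le> (\<integral>x. f x \<partial>lborel)" by (rule Bochner_Integration.integral_mono[OF \<phi>i fi \<phi>f])
    then show ?thesis unfolding c0_def using If by simp
  qed
  have c0le1: "c0 \<le> 1" unfolding c0_def using integral_nonneg_AE[of \<phi> lborel] \<phi>0 by auto
  have c0small: "c0 < \<eta> / (Bp + 1)"
  proof -
    have "ennreal c0 < ennreal (\<eta> / (Bp + 1))" using kC c0eq unfolding \<phi>_def by simp
    then show ?thesis using c0pos \<eta> Bp by (simp add: ennreal_less_iff)
  qed
  define \<eta>2 where "\<eta>2 = \<eta> / (real k powr (p - 1) + 1)"
  have \<eta>2: "\<eta>2 > 0" unfolding \<eta>2_def using \<eta> by (simp add: add_nonneg_pos)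
  obtain \<sigma> where \<sigma>: "\<sigma> > 0"
    and convB: "(\<integral>\<^sup>+x. ennreal \<bar>(\<integral>y. \<phi> y * gsc g \<sigma> (x - y) \<partial>lborel) - \<phi> x\<bar> \<partial>lborel) < ennreal \<eta>2"
    using conv_L1[OF _ _ g0 g1 \<phi>M \<phi>i \<eta>2] by auto
  define conv where "conv x = (\<integral>y. \<phi> y * gsc g \<sigma> (x - y) \<partial>lborel)" for x
  have [measurable]: "conv \<in> borel_measurable borel" unfolding conv_def by simp
  define K where "K = B / \<sigma> ^ DIM('a)"
  have K0: "K \<ge> 0" unfolding K_def using B0 \<sigma> by simp
  have G0: "\<And>z. gsc g \<sigma> z \<ge> 0" using gsc_nonneg[of g \<sigma>] g0 \<sigma> by blast
  have GK: "\<And>z. gsc g \<sigma> z \<le> K" unfolding K_def gsc_def using gB \<sigma> by (simp add: divide_right_mono)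
  have convi: "integrable lborel (\<lambda>y. \<phi> y * gsc g \<sigma> (x - y))" for x
    by (rule integrable_mult_gsc[OF _ _ g0 gi \<sigma> \<phi>M]) simp_all
  have conv0: "conv x \<ge> 0" for x unfolding conv_def
    by (rule integral_nonneg_AE) (use \<phi>0 G0 in auto)
  have convk: "conv x \<le> real k" for x
  proof -
    have "conv x \<le> (\<integral>y. real k * gsc g \<sigma> (x - y) \<partial>lborel)" unfolding conv_def
      by (rule Bochner_Integration.integral_mono[OF convi]) (use integral_gsc_one(1)[OF _ g0 g1 \<sigma>, where x=x] \<phi>k G0 in \<open>auto intro: mult_right_mono\<close>)
    also have "\<dots> = real k" using integral_gsc_one(2)[OF _ g0 g1 \<sigma>, where x=x] by simp
    finally show ?thesis .
  qed
  have convK: "conv x \<le> K" for x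
  proof -
    have "conv x \<le> (\<integral>y. \<phi> y * K \<partial>lborel)" unfolding conv_def
      by (rule Bochner_Integration.integral_mono[OF convi]) (use \<phi>i \<phi>0 GK in \<open>auto intro: mult_left_mono\<close>)
    also have "\<dots> = (\<integral>y. \<phi> y \<partial>lborel) * K" by simp
    also have "\<dots> \<le> 1 * K" using c0pos K0 unfolding c0_def by (intro mult_right_mono) auto
    finally show ?thesis by simp
  qed
  define \<eta>3 where "\<eta>3 = \<eta> / (K powr (p - 1) + 1)"
  have \<eta>3: "\<eta>3 > 0" unfolding \<eta>3_def using \<eta> by (simp add: add_nonneg_pos)
  have gint: "integrable lborel g" by (rule integrableI_bounded) (use gi g0 in simp_all)
  obtain \<delta>g where \<delta>g: "\<delta>g > 0" "\<And>t. norm t < \<delta>g \<Longrightarrow> (\<integral>\<^sup>+w. ennreal \<bar>g (w + t) - g w\<bar> \<partial>lborel) < ennreal \<eta>3"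
    using tcs_delta[OF tcs_integrable[OF gint] \<eta>3] by auto
  define D where "D = \<delta>g / 2"
  have tg: "(\<integral>\<^sup>+w. ennreal \<bar>g (w + t) - g w\<bar> \<partial>lborel) \<le> ennreal \<eta>3" if "norm t \<le> D" for t
    using \<delta>g(2)[of t] that \<delta>g(1) unfolding D_def by (auto intro: less_imp_le)
  define d where "d = D * \<sigma> / DIM('a)"
  have d: "d > 0" unfolding d_def D_def using \<delta>g \<sigma> by simp
  have dD: "DIM('a) * d / \<sigma> \<le> D" unfolding d_def using \<sigma> by simp
  define P where "P = rep d ` Q"
  have Pfin: "finite P" unfolding P_def by (rule rep_finite[OF Qb d])
  define w where "w p' = (\<integral>y. \<phi> y * indicator (rep d -` {p'}) y \<partial>lborel)" for p'
  have w0: "w p' \<ge> 0" for p' unfolding w_def by (rule integral_nonneg_AE) (use \<phi>0 in \<open>auto simp: indicator_def\<close>)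
  have wsum: "(\<Sum>p'\<in>P. w p') = (\<integral>y. \<phi> y \<partial>lborel)"
    unfolding w_def P_def by (rule weights_sum[OF Qb d \<phi>Q \<phi>i])
  define A where "A x = (\<Sum>p'\<in>P. w p' * gsc g \<sigma> (x - p')) - conv x" for x
  have [measurable]: "A \<in> borel_measurable borel" unfolding A_def by measurable
  have AL1: "(\<integral>\<^sup>+x. ennreal \<bar>A x\<bar> \<partial>lborel) \<le> ennreal \<eta>3"
  proof -
    have "(\<integral>\<^sup>+x. ennreal \<bar>A x\<bar> \<partial>lborel) \<le> ennreal \<eta>3 * (\<integral>\<^sup>+y. ennreal \<bar>\<phi> y\<bar> \<partial>lborel)"
      unfolding A_def w_def conv_def P_def
      by (rule riemann_L1[OF _ _ g0 gi \<sigma> d \<phi>M \<phi>Q Qb \<phi>i tg dD]) simp_all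
    also have "\<dots> \<le> ennreal \<eta>3 * 1" by (intro mult_left_mono \<phi>nn) simp
    finally show ?thesis by simp
  qed
  have AK: "\<bar>A x\<bar> \<le> K" for x
  proof -
    have s0: "(\<Sum>p'\<in>P. w p' * gsc g \<sigma> (x - p')) \<ge> 0" by (intro sum_nonneg mult_nonneg_nonneg w0 G0)
    have "(\<Sum>p'\<in>P. w p' * gsc g \<sigma> (x - p')) \<le> (\<Sum>p'\<in>P. w p' * K)"
      by (intro sum_mono mult_left_mono GK w0)
    also have "\<dots> = (\<integral>y. \<phi> y \<partial>lborel) * K" by (simp add: sum_distrib_right[symmetric] wsum)
    also have "\<dots> \<le> 1 * K" using c0pos K0 unfolding c0_def by (intro mult_right_mono) auto
    finally have s1: "(\<Sum>p'\<in>P. w p' * gsc g \<sigma> (x - p')) \<le> K" by simp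
    show ?thesis unfolding A_def using s0 s1 conv0[of x] convK[of x] by linarith
  qed
  define h where "h x = (\<Sum>p'\<in>P. w p' * gsc g \<sigma> (x - p')) + c0 * gsc g 1 (x - 0)" for x
  have hmix: "h \<in> mixtures g m" if "m \<ge> card P + 1" for m
  proof -
    have "(\<lambda>x. (\<Sum>p'\<in>P. w p' * gsc g \<sigma> (x - p')) + c0 * gsc g 1 (x - 0)) \<in> mixtures g m"
      by (rule mixture_finite[OF Pfin w0 c0pos _ \<sigma> _ that]) (use wsum in \<open>simp_all add: c0_def\<close>)
    then show ?thesis unfolding h_def[abs_def] .
  qed
  have hdec: "f x - h x = - (A x + (conv x - \<phi> x) + c0 * g x + (\<phi> x - f x))" for x
    unfolding h_def A_def by (simp add: gsc_def)
  have estA: "(\<integral>\<^sup>+x. ennreal (\<bar>A x\<bar> powr p) \<partial>lborel) < ennreal \<eta>"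
  proof -
    have "(\<integral>\<^sup>+x. ennreal (\<bar>A x\<bar> powr p) \<partial>lborel) \<le> ennreal (K powr (p - 1)) * (\<integral>\<^sup>+x. ennreal \<bar>A x\<bar> \<partial>lborel)"
      by (rule int_abs_pow_bound[OF _ AK p]) simp
    also have "\<dots> \<le> ennreal (K powr (p - 1)) * ennreal \<eta>3" by (intro mult_left_mono AL1) simp
    also have "\<dots> = ennreal (K powr (p - 1) * \<eta>3)" using \<eta>3 by (simp add: ennreal_mult)
    also have "\<dots> < ennreal \<eta>"
    proof (rule ennreal_lessI[OF \<eta>])
      have "K powr (p - 1) * \<eta>3 = \<eta> * (K powr (p - 1) / (K powr (p - 1) + 1))" unfolding \<eta>3_def by (simp add: field_simps)
      also have "\<dots> < \<eta> * 1" using \<eta> by (intro mult_strict_left_mono) (auto simp: add_nonneg_pos)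
      finally show "K powr (p - 1) * \<eta>3 < \<eta>" by simp
    qed
    finally show ?thesis .
  qed
  have estB: "(\<integral>\<^sup>+x. ennreal (\<bar>conv x - \<phi> x\<bar> powr p) \<partial>lborel) < ennreal \<eta>"
  proof -
    have bk: "\<bar>conv x - \<phi> x\<bar> \<le> real k" for x using conv0[of x] convk[of x] \<phi>0[of x] \<phi>k[of x] by linarith
    have "(\<integral>\<^sup>+x. ennreal (\<bar>conv x - \<phi> x\<bar> powr p) \<partial>lborel) \<le> ennreal (real k powr (p - 1)) * (\<integral>\<^sup>+x. ennreal \<bar>conv x - \<phi> x\<bar> \<partial>lborel)"
      by (rule int_abs_pow_bound[OF _ bk p]) simp
    also have "\<dots> \<le> ennreal (real k powr (p - 1)) * ennreal \<eta>2"
      using convB unfolding conv_def by (intro mult_left_mono) auto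
    also have "\<dots> = ennreal (real k powr (p - 1) * \<eta>2)" using \<eta>2 by (simp add: ennreal_mult)
    also have "\<dots> < ennreal \<eta>"
    proof (rule ennreal_lessI[OF \<eta>])
      have "real k powr (p - 1) * \<eta>2 = \<eta> * (real k powr (p - 1) / (real k powr (p - 1) + 1))" unfolding \<eta>2_def by (simp add: field_simps)
      also have "\<dots> < \<eta> * 1" using \<eta> by (intro mult_strict_left_mono) (auto simp: add_nonneg_pos)
      finally show "real k powr (p - 1) * \<eta>2 < \<eta>" by simp
    qed
    finally show ?thesis .
  qed
  have estC: "(\<integral>\<^sup>+x. ennreal (\<bar>c0 * g x\<bar> powr p) \<partial>lborel) < ennreal \<eta>"
  proof -
    have "(\<integral>\<^sup>+x. ennreal (\<bar>c0 * g x\<bar> powr p) \<partial>lborel) \<le> (\<integral>\<^sup>+x. ennreal (c0 * Bp) * ennreal (g x) \<partial>lborel)"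
    proof (intro nn_integral_mono)
      fix x
      have "\<bar>c0 * g x\<bar> powr p = c0 powr p * g x powr p" using c0pos g0[of x] by (simp add: powr_mult abs_mult)
      also have "\<dots> \<le> c0 * (Bp * g x)"
      proof (rule mult_mono)
        show "c0 powr p \<le> c0"
        proof (cases "c0 = 0")
          case False
          have "c0 powr p \<le> c0 powr 1" using c0pos c0le1 p by (intro powr_mono') auto
          then show ?thesis using c0pos by simp
        qed simp
        show "g x powr p \<le> Bp * g x" unfolding Bp_def by (rule pow_le_lin[OF g0 gB p])
      qed (use c0pos Bp g0 in auto)
      finally show "ennreal (\<bar>c0 * g x\<bar> powr p) \<le> ennreal (c0 * Bp) * ennreal (g x)"
        using c0pos Bp g0[of x] by (simp add: ennreal_mult[symmetric] ennreal_leI mult.assoc)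
    qed
    also have "\<dots> = ennreal (c0 * Bp)" using g1 by (subst nn_integral_cmult) auto
    also have "\<dots> < ennreal \<eta>"
    proof (rule ennreal_lessI[OF \<eta>])
      have "c0 * Bp \<le> c0 * (Bp + 1)" using c0pos by (intro mult_left_mono) auto
      also have "\<dots> < \<eta> / (Bp + 1) * (Bp + 1)" using c0small Bp by (intro mult_strict_right_mono) auto
      also have "\<dots> = \<eta>" using Bp by simp
      finally show "c0 * Bp < \<eta>" .
    qed
    finally show ?thesis .
  qed
  have estD: "(\<integral>\<^sup>+x. ennreal (\<bar>\<phi> x - f x\<bar> powr p) \<partial>lborel) < ennreal \<eta>"
    using kD unfolding \<phi>_def by (simp add: abs_minus_commute)
  have total: "(\<integral>\<^sup>+x. ennreal (\<bar>f x - h x\<bar> powr p) \<partial>lborel) < ennreal \<epsilon>"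
  proof -
    have "(\<integral>\<^sup>+x. ennreal (\<bar>f x - h x\<bar> powr p) \<partial>lborel)
       \<le> (\<integral>\<^sup>+x. ennreal (4 powr p) * (ennreal (\<bar>A x\<bar> powr p) + ennreal (\<bar>conv x - \<phi> x\<bar> powr p)
              + ennreal (\<bar>c0 * g x\<bar> powr p) + ennreal (\<bar>\<phi> x - f x\<bar> powr p)) \<partial>lborel)"
    proof (intro nn_integral_mono)
      fix x
      have "\<bar>f x - h x\<bar> powr p \<le> 4 powr p * (\<bar>A x\<bar> powr p + \<bar>conv x - \<phi> x\<bar> powr p + \<bar>c0 * g x\<bar> powr p + \<bar>\<phi> x - f x\<bar> powr p)"
        unfolding hdec abs_minus_cancel using p by (intro pow4) auto
      then show "ennreal (\<bar>f x - h x\<bar> powr p) \<le> ennreal (4 powr p) * (ennreal (\<bar>A x\<bar> powr p) + ennreal (\<bar>conv x - \<phi> x\<bar> powr p)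
              + ennreal (\<bar>c0 * g x\<bar> powr p) + ennreal (\<bar>\<phi> x - f x\<bar> powr p))"
        by (simp add: ennreal_plus[symmetric] ennreal_mult[symmetric] ennreal_leI del: ennreal_plus)
    qed
    also have "\<dots> = ennreal (4 powr p) * ((\<integral>\<^sup>+x. ennreal (\<bar>A x\<bar> powr p) \<partial>lborel) + (\<integral>\<^sup>+x. ennreal (\<bar>conv x - \<phi> x\<bar> powr p) \<partial>lborel)
              + (\<integral>\<^sup>+x. ennreal (\<bar>c0 * g x\<bar> powr p) \<partial>lborel) + (\<integral>\<^sup>+x. ennreal (\<bar>\<phi> x - f x\<bar> powr p) \<partial>lborel))"
      by (simp add: nn_integral_cmult nn_integral_add)
    also have "\<dots> < ennreal (4 powr p) * ennreal (\<eta> + \<eta> + \<eta> + \<eta>)"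
    proof -
      have "(\<integral>\<^sup>+x. ennreal (\<bar>A x\<bar> powr p) \<partial>lborel) + (\<integral>\<^sup>+x. ennreal (\<bar>conv x - \<phi> x\<bar> powr p) \<partial>lborel)
              + (\<integral>\<^sup>+x. ennreal (\<bar>c0 * g x\<bar> powr p) \<partial>lborel) + (\<integral>\<^sup>+x. ennreal (\<bar>\<phi> x - f x\<bar> powr p) \<partial>lborel)
            < ennreal (\<eta> + \<eta> + \<eta> + \<eta>)"
        by (intro ennreal_add_less2 estA estB estC estD)
      moreover have "ennreal (4 powr p) > 0" by simp
      ultimately show ?thesis by (simp add: ennreal_mult_strict_left_mono)
    qed
    also have "\<dots> = ennreal (4 powr p * (\<eta> + \<eta> + \<eta> + \<eta>))"
      by (rule ennreal_mult[symmetric]) (use \<eta> in auto)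
    also have "\<dots> = ennreal \<epsilon>" unfolding \<eta>_def by simp
    finally show ?thesis .
  qed
  show ?thesis
    by (intro exI[of _ "card P + 1"] allI impI bexI[of _ h] total hmix)
qed

lemma AE_lborel_affine:
  fixes P :: "'a::euclidean_space \<Rightarrow> bool"
  assumes s: "s > 0" and ae: "AE y in lborel. P y"
  shows "AE x in lborel. P ((x - a) /\<^sub>R s)"
proof -
  obtain N where N: "{y \<in> space lborel. \<not> P y} \<subseteq> N" "emeasure lborel N = 0" "N \<in> sets lborel"
    using ae by (rule AE_E)
  have [measurable]: "N \<in> sets borel" using N(3) by simp
  let ?N = "{x. (x - a) /\<^sub>R s \<in> N}"
  have Nm: "?N \<in> sets borel" by measurable
  have "emeasure lborel ?N = (\<integral>\<^sup>+x. indicator ?N x \<partial>lborel)" using Nm by simp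
  also have "\<dots> = (\<integral>\<^sup>+x. indicator N ((x - a) /\<^sub>R s) \<partial>lborel)"
    by (intro nn_integral_cong) (simp add: indicator_def)
  also have "\<dots> = ennreal (s ^ DIM('a)) * (\<integral>\<^sup>+z. indicator N z \<partial>lborel)"
    by (rule nn_integral_lborel_shift_scale[OF _ s]) simp
  also have "\<dots> = 0" using N(2) N(3) by simp
  finally have "emeasure lborel ?N = 0" .
  then show ?thesis
    by (intro AE_I[where N="?N"]) (use N(1) Nm in auto)
qed

lemma mixtures_nonempty:
  assumes "m \<ge> 1"
  shows "mixtures g m \<noteq> {}"
proof -
  have "(\<lambda>x. (\<Sum>p\<in>{}. (\<lambda>_. 0) p * gsc g 1 (x - p)) + 1 * gsc g 1 (x - 0)) \<in> mixtures g m"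
    by (rule mixture_finite) (use assms in auto)
  then show ?thesis by blast
qed

lemma mixtures_AE:
  fixes g g2 :: "'a::euclidean_space \<Rightarrow> real"
  assumes ae: "AE x in lborel. g x = g2 x" and h2: "h2 \<in> mixtures g2 m"
  shows "\<exists>h\<in>mixtures g m. AE x in lborel. h x = h2 x"
proof -
  obtain c \<mu> \<sigma> where pos: "\<forall>i<m. 0 < \<sigma> i \<and> 0 \<le> c i" and sc: "(\<Sum>i<m. c i) = 1"
    and h2eq: "h2 = (\<lambda>x. \<Sum>i<m. c i / \<sigma> i ^ DIM('a) * g2 ((x - \<mu> i) /\<^sub>R \<sigma> i))"
    using h2 unfolding mixtures_def by blast
  define h where "h = (\<lambda>x. \<Sum>i<m. c i / \<sigma> i ^ DIM('a) * g ((x - \<mu> i) /\<^sub>R \<sigma> i))"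
  have hm: "h \<in> mixtures g m" unfolding mixtures_def h_def using pos sc by blast
  have "AE x in lborel. \<forall>i\<in>{..<m}. g ((x - \<mu> i) /\<^sub>R \<sigma> i) = g2 ((x - \<mu> i) /\<^sub>R \<sigma> i)"
  proof (rule AE_finite_allI)
    fix i assume "i \<in> {..<m}"
    then have "\<sigma> i > 0" using pos by auto
    then show "AE x in lborel. g ((x - \<mu> i) /\<^sub>R \<sigma> i) = g2 ((x - \<mu> i) /\<^sub>R \<sigma> i)"
      by (rule AE_lborel_affine[OF _ ae])
  qed simp
  then have "AE x in lborel. h x = h2 x"
    by eventually_elim (simp add: h_def h2eq)
  then show ?thesis using hm by blast
qed

lemma partB:
  fixes f g :: "'a::euclidean_space \<Rightarrow> real"
  assumes pf: "is_pdf f" and pg: "is_pdf g" and p: "1 \<le> p" and fL: "in_Lp p f" and gL: "in_Linf g"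
  shows "\<exists>h. (\<forall>m\<ge>1. h m \<in> mixtures g m) \<and> (\<lambda>m. Lp_dist_pow p f (h m)) \<longlonglongrightarrow> 0"
proof -
  have fm: "f \<in> borel_measurable (completion lborel)" and f0: "\<And>x. f x \<ge> 0"
    and f1: "(\<integral>\<^sup>+x. ennreal (f x) \<partial>lebesgue) = 1"
    using pf by (auto simp: is_pdf_def)
  have gm: "g \<in> borel_measurable (completion lborel)" and g0: "\<And>x. g x \<ge> 0"
    and g1: "(\<integral>\<^sup>+x. ennreal (g x) \<partial>lebesgue) = 1"
    using pg by (auto simp: is_pdf_def)
  have fp: "(\<integral>\<^sup>+x. ennreal (\<bar>f x\<bar> powr p) \<partial>lebesgue) < \<infinity>" using fL by (simp add: in_Lp_def)
  obtain B where gB: "AE x in lebesgue. \<bar>g x\<bar> \<le> B" using gL by (auto simp: in_Linf_def)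
  obtain f' where f'm: "f' \<in> borel_measurable lborel" and ff': "AE x in lborel. f x = f' x"
    using completion_ex_borel_measurable_real[OF fm] by blast
  obtain g' where g'm: "g' \<in> borel_measurable lborel" and gg': "AE x in lborel. g x = g' x"
    using completion_ex_borel_measurable_real[OF gm] by blast
  define f2 where "f2 x = max 0 (f' x)" for x
  define g2 where "g2 x = max 0 (min (g' x) B)" for x
  have [measurable]: "f' \<in> borel_measurable borel" "g' \<in> borel_measurable borel" using f'm g'm by auto
  have [measurable]: "f2 \<in> borel_measurable borel" "g2 \<in> borel_measurable borel"
    unfolding f2_def[abs_def] g2_def[abs_def] by measurable
  have ff2: "AE x in lborel. f x = f2 x" using ff'
  proof eventually_elim
    case (elim x) then show ?case using f0[of x] by (simp add: f2_def)
  qed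
  have gB': "AE x in lborel. \<bar>g x\<bar> \<le> B" using gB by (simp add: AE_completion_iff)
  have gg2: "AE x in lborel. g x = g2 x" using gg' gB'
  proof eventually_elim
    case (elim x) then show ?case using g0[of x] by (simp add: g2_def)
  qed
  have f20: "\<And>x. f2 x \<ge> 0" and g20: "\<And>x. g2 x \<ge> 0" and g2B: "\<And>x. g2 x \<le> max 0 B"
    by (auto simp: f2_def g2_def)
  have f21: "(\<integral>\<^sup>+x. ennreal (f2 x) \<partial>lborel) = 1"
  proof -
    have "(\<integral>\<^sup>+x. ennreal (f2 x) \<partial>lborel) = (\<integral>\<^sup>+x. ennreal (f x) \<partial>lborel)"
      by (rule nn_integral_cong_AE) (use ff2 in auto)
    then show ?thesis using f1 by (simp add: nn_integral_completion)
  qed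
  have g21: "(\<integral>\<^sup>+x. ennreal (g2 x) \<partial>lborel) = 1"
  proof -
    have "(\<integral>\<^sup>+x. ennreal (g2 x) \<partial>lborel) = (\<integral>\<^sup>+x. ennreal (g x) \<partial>lborel)"
      by (rule nn_integral_cong_AE) (use gg2 in auto)
    then show ?thesis using g1 by (simp add: nn_integral_completion)
  qed
  have f2p: "(\<integral>\<^sup>+x. ennreal (f2 x powr p) \<partial>lborel) < \<infinity>"
  proof -
    have "(\<integral>\<^sup>+x. ennreal (f2 x powr p) \<partial>lborel) = (\<integral>\<^sup>+x. ennreal (\<bar>f x\<bar> powr p) \<partial>lborel)"
      by (rule nn_integral_cong_AE) (use ff2 f0 in auto)
    then show ?thesis using fp by (simp add: nn_integral_completion)
  qed
  have approx: "\<exists>N. \<forall>m\<ge>N. \<exists>h\<in>mixtures g m. Lp_dist_pow p f h < ennreal e" if e: "e > 0" for e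
  proof -
    obtain N where N: "\<And>m. m \<ge> N \<Longrightarrow> \<exists>h\<in>mixtures g2 m. (\<integral>\<^sup>+x. ennreal (\<bar>f2 x - h x\<bar> powr p) \<partial>lborel) < ennreal e"
      using partB_core[OF _ _ f20 f21 f2p g20 g21 g2B p e] by auto
    show ?thesis
    proof (intro exI allI impI)
      fix m assume m: "m \<ge> N"
      obtain h2 where h2: "h2 \<in> mixtures g2 m" "(\<integral>\<^sup>+x. ennreal (\<bar>f2 x - h2 x\<bar> powr p) \<partial>lborel) < ennreal e"
        using N[OF m] by auto
      obtain h where h: "h \<in> mixtures g m" "AE x in lborel. h x = h2 x"
        using mixtures_AE[OF gg2 h2(1)] by auto
      have "Lp_dist_pow p f h = (\<integral>\<^sup>+x. ennreal (\<bar>f x - h x\<bar> powr p) \<partial>lborel)"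
        unfolding Lp_dist_pow_def by (simp add: nn_integral_completion)
      also have "\<dots> = (\<integral>\<^sup>+x. ennreal (\<bar>f2 x - h2 x\<bar> powr p) \<partial>lborel)"
        by (rule nn_integral_cong_AE) (use ff2 h(2) in \<open>eventually_elim, simp\<close>)
      finally have "Lp_dist_pow p f h < ennreal e" using h2(2) by simp
      then show "\<exists>h\<in>mixtures g m. Lp_dist_pow p f h < ennreal e" using h(1) by blast
    qed
  qed
  show ?thesis
    by (rule select_seq[where E="Lp_dist_pow p f" and M="mixtures g"]) (use mixtures_nonempty approx in auto)
qed

lemma cont_bound_on:
  fixes f :: "'a::euclidean_space \<Rightarrow> real"
  assumes "continuous_on UNIV f" "compact S"
  obtains F where "F \<ge> 0" "\<And>y. y \<in> S \<Longrightarrow> \<bar>f y\<bar> \<le> F"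
proof -
  have "compact (f ` S)" by (rule compact_continuous_image) (use assms continuous_on_subset in auto)
  then obtain F where "\<forall>x\<in>S. \<bar>f x\<bar> \<le> F" by (auto dest!: compact_imp_bounded simp: bounded_iff)
  then have "\<And>y. y \<in> S \<Longrightarrow> \<bar>f y\<bar> \<le> F" by blast
  then show ?thesis using that[of "max F 0"] by fastforce
qed

lemma unif_cont_on:
  fixes f :: "'a::euclidean_space \<Rightarrow> real"
  assumes "continuous_on UNIV f" "compact S" "e > 0"
  obtains d where "d > 0" "\<And>x y. x \<in> S \<Longrightarrow> y \<in> S \<Longrightarrow> dist x y < d \<Longrightarrow> \<bar>f x - f y\<bar> < e"
proof -
  have "uniformly_continuous_on S f"
    by (rule compact_uniformly_continuous) (use assms continuous_on_subset in auto)
  then obtain d where "d > 0" "\<forall>x\<in>S. \<forall>x'\<in>S. dist x' x < d \<longrightarrow> dist (f x') (f x) < e"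
    using assms(3) unfolding uniformly_continuous_on_def by metis
  then show ?thesis using that[of d] by (auto simp: dist_real_def dist_commute)
qed

lemma partA_core:
  fixes f g :: "'a::euclidean_space \<Rightarrow> real" and K :: "'a set"
  assumes fc: "continuous_on UNIV f" and gc: "continuous_on UNIV g"
    and f0: "\<And>x. f x \<ge> 0" and f1: "(\<integral>\<^sup>+x. ennreal (f x) \<partial>lborel) = 1"
    and g0: "\<And>x. g x \<ge> 0" and g1: "(\<integral>\<^sup>+x. ennreal (g x) \<partial>lborel) = 1"
    and K: "compact K" and e: "\<epsilon> > 0"
  shows "\<exists>N. \<forall>m\<ge>N. \<exists>h\<in>mixtures g m. \<forall>x\<in>K. \<bar>f x - h x\<bar> \<le> \<epsilon>"
proof -
  have [measurable]: "f \<in> borel_measurable borel" "g \<in> borel_measurable borel"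
    using fc gc by (auto intro: borel_measurable_continuous_onI)
  have gi: "(\<integral>\<^sup>+z. ennreal (g z) \<partial>lborel) < \<infinity>" using g1 by simp
  obtain R0 where R0: "R0 \<ge> 0" "\<And>x. x \<in> K \<Longrightarrow> norm x \<le> R0"
  proof -
    obtain R where "\<forall>x\<in>K. norm x \<le> R" using compact_imp_bounded[OF K] by (auto simp: bounded_iff)
    then show ?thesis using that[of "max R 0"] by fastforce
  qed
  define Q where "Q = cball (0::'a) (R0 + 1)"
  have Qc: "compact Q" and Qb: "bounded Q" unfolding Q_def by auto
  have KQ: "x \<in> K \<Longrightarrow> x \<in> Q" for x using R0(2)[of x] by (simp add: Q_def)
  obtain F where F: "F \<ge> 0" "\<And>y. y \<in> Q \<Longrightarrow> \<bar>f y\<bar> \<le> F" using cont_bound_on[OF fc Qc] by blast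
  define \<phi> where "\<phi> y = f y * indicator Q y" for y
  have [measurable]: "Q \<in> sets borel" unfolding Q_def by simp
  have [measurable]: "\<phi> \<in> borel_measurable borel" unfolding \<phi>_def[abs_def] by measurable
  have \<phi>0: "\<And>y. \<phi> y \<ge> 0" and \<phi>f: "\<And>y. \<phi> y \<le> f y" and \<phi>M: "\<And>y. \<bar>\<phi> y\<bar> \<le> F"
    and \<phi>Q: "\<And>y. y \<notin> Q \<Longrightarrow> \<phi> y = 0" and \<phi>Q': "\<And>y. y \<in> Q \<Longrightarrow> \<phi> y = f y"
    using f0 F by (auto simp: \<phi>_def indicator_def)
  have fi: "integrable lborel f" by (rule integrableI_bounded) (use f1 f0 in simp_all)
  have \<phi>i: "integrable lborel \<phi>"
    by (rule Bochner_Integration.integrable_bound[OF fi]) (use \<phi>0 \<phi>f in \<open>auto intro!: AE_I2 order_trans[OF _ abs_ge_self]\<close>)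
  have \<phi>nn: "(\<integral>\<^sup>+x. ennreal \<bar>\<phi> x\<bar> \<partial>lborel) \<le> 1"
  proof -
    have "(\<integral>\<^sup>+x. ennreal \<bar>\<phi> x\<bar> \<partial>lborel) \<le> (\<integral>\<^sup>+x. ennreal (f x) \<partial>lborel)"
      by (intro nn_integral_mono ennreal_leI) (use \<phi>0 \<phi>f in auto)
    then show ?thesis using f1 by simp
  qed
  have I\<phi>: "(\<integral>x. \<phi> x \<partial>lborel) \<le> 1"
  proof -
    have "(\<integral>\<^sup>+x. ennreal \<bar>\<phi> x\<bar> \<partial>lborel) = ennreal (\<integral>x. \<bar>\<phi> x\<bar> \<partial>lborel)"
      by (rule nn_integral_eq_integral) (use \<phi>i in auto)
    then have "ennreal (\<integral>x. \<phi> x \<partial>lborel) \<le> 1" using \<phi>nn \<phi>0 by (simp add: abs_of_nonneg)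
    then show ?thesis by (simp add: ennreal_le_1)
  qed
  define \<eta> where "\<eta> = \<epsilon> / 4"
  have \<eta>: "\<eta> > 0" unfolding \<eta>_def using e by simp
  obtain T0 where T0: "(\<integral>\<^sup>+z. ennreal (g z) * indicator {z. norm z > T0} z \<partial>lborel) < ennreal (\<eta> / (2 * F + 1))"
    using tail_small[OF _ g0 gi, of "\<eta> / (2 * F + 1)"] \<eta> F(1) by auto
  define T where "T = max T0 0"
  have T: "T \<ge> 0" unfolding T_def by simp
  have tail: "(\<integral>\<^sup>+z. ennreal (g z) * indicator {z. norm z > T} z \<partial>lborel) \<le> ennreal (\<eta> / (2 * F + 1))"
  proof -
    have "(\<integral>\<^sup>+z. ennreal (g z) * indicator {z. norm z > T} z \<partial>lborel) \<le> (\<integral>\<^sup>+z. ennreal (g z) * indicator {z. norm z > T0} z \<partial>lborel)"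
      by (intro nn_integral_mono) (auto simp: T_def indicator_def)
    then show ?thesis using T0 by simp
  qed
  obtain \<tau> where \<tau>: "\<tau> > 0" "\<And>x y. x \<in> Q \<Longrightarrow> y \<in> Q \<Longrightarrow> dist x y < \<tau> \<Longrightarrow> \<bar>f x - f y\<bar> < \<eta>"
    using unif_cont_on[OF fc Qc \<eta>] by blast
  define s where "s = min \<tau> 1 / (T + 1)"
  have s: "s > 0" unfolding s_def using \<tau> T by simp
  have sT: "s * T < min \<tau> 1"
  proof -
    have "s * T = min \<tau> 1 * (T / (T + 1))" unfolding s_def using T by (simp add: field_simps)
    also have "\<dots> < min \<tau> 1 * 1" using \<tau> T by (intro mult_strict_left_mono) auto
    finally show ?thesis by simp
  qed
  define conv where "conv x = (\<integral>y. \<phi> y * gsc g s (x - y) \<partial>lborel)" for x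
  have convE: "\<bar>conv x - f x\<bar> \<le> 2 * \<eta>" if x: "x \<in> K" for x
  proof -
    have "ennreal \<bar>conv x - f x\<bar> \<le> (\<integral>\<^sup>+z. ennreal (\<bar>\<phi> (x - s *\<^sub>R z) - f x\<bar> * g z) \<partial>lborel)"
      unfolding conv_def by (rule conv_diff_pointwise[OF _ _ g0 g1 s \<phi>M]) simp_all
    also have "\<dots> \<le> (\<integral>\<^sup>+z. ennreal \<eta> * ennreal (g z) + ennreal (2 * F) * (ennreal (g z) * indicator {z. norm z > T} z) \<partial>lborel)"
    proof (intro nn_integral_mono)
      fix z :: 'a
      show "ennreal (\<bar>\<phi> (x - s *\<^sub>R z) - f x\<bar> * g z) \<le> ennreal \<eta> * ennreal (g z) + ennreal (2 * F) * (ennreal (g z) * indicator {z. norm z > T} z)"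
      proof (cases "norm z > T")
        case True
        have "\<bar>\<phi> (x - s *\<^sub>R z) - f x\<bar> \<le> 2 * F" using \<phi>M[of "x - s *\<^sub>R z"] F(2)[OF KQ[OF x]] by linarith
        then have "\<bar>\<phi> (x - s *\<^sub>R z) - f x\<bar> * g z \<le> 2 * F * g z" using g0[of z] by (intro mult_right_mono) auto
        then have "ennreal (\<bar>\<phi> (x - s *\<^sub>R z) - f x\<bar> * g z) \<le> ennreal (2 * F) * (ennreal (g z) * indicator {z. norm z > T} z)"
          using True F(1) g0[of z] by (simp add: ennreal_mult[symmetric] ennreal_leI)
        then show ?thesis by (simp add: add_increasing)
      next
        case False
        have nz: "norm (s *\<^sub>R z) \<le> s * T" using s False by (simp add: mult_left_mono)
        have xQ: "x - s *\<^sub>R z \<in> Q"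
        proof -
          have "norm (x - s *\<^sub>R z) \<le> norm x + norm (s *\<^sub>R z)" by (rule norm_triangle_ineq4)
          also have "\<dots> \<le> R0 + 1" using R0(2)[OF x] nz sT by linarith
          finally show ?thesis by (simp add: Q_def)
        qed
        have "dist (x - s *\<^sub>R z) x < \<tau>" using nz sT by (simp add: dist_norm)
        then have "\<bar>f (x - s *\<^sub>R z) - f x\<bar> < \<eta>" using \<tau>(2)[OF xQ KQ[OF x]] by simp
        then have "\<bar>\<phi> (x - s *\<^sub>R z) - f x\<bar> * g z \<le> \<eta> * g z" using g0[of z] \<phi>Q'[OF xQ] by (intro mult_right_mono) auto
        then have "ennreal (\<bar>\<phi> (x - s *\<^sub>R z) - f x\<bar> * g z) \<le> ennreal \<eta> * ennreal (g z)"
          using \<eta> g0[of z] by (simp add: ennreal_mult[symmetric] ennreal_leI)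
        then show ?thesis by (simp add: add_increasing2)
      qed
    qed
    also have "\<dots> = ennreal \<eta> * (\<integral>\<^sup>+z. ennreal (g z) \<partial>lborel) + ennreal (2 * F) * (\<integral>\<^sup>+z. ennreal (g z) * indicator {z. norm z > T} z \<partial>lborel)"
      by (subst nn_integral_add) (auto simp: nn_integral_cmult)
    also have "\<dots> \<le> ennreal \<eta> + ennreal (2 * F) * ennreal (\<eta> / (2 * F + 1))"
      using g1 tail by (auto intro!: mult_left_mono)
    also have "\<dots> = ennreal (\<eta> + 2 * F * (\<eta> / (2 * F + 1)))"
      using F(1) \<eta> by (simp add: ennreal_mult[symmetric] ennreal_plus[symmetric] del: ennreal_plus)
    also have "\<dots> \<le> ennreal (2 * \<eta>)"
    proof (rule ennreal_leI)
      have "2 * F * (\<eta> / (2 * F + 1)) = \<eta> * (2 * F / (2 * F + 1))" by (simp add: field_simps)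
      also have "\<dots> \<le> \<eta> * 1" using F(1) \<eta> by (intro mult_left_mono) auto
      finally show "\<eta> + 2 * F * (\<eta> / (2 * F + 1)) \<le> 2 * \<eta>" by simp
    qed
    finally show ?thesis using \<eta> by (simp add: ennreal_le_iff)
  qed
  define C where "C = cball (0::'a) ((2 * R0 + 2) / s)"
  have Cc: "compact C" unfolding C_def by simp
  have sn: "s ^ DIM('a) > 0" using s by simp
  obtain \<rho> where \<rho>: "\<rho> > 0" "\<And>a b. a \<in> C \<Longrightarrow> b \<in> C \<Longrightarrow> dist a b < \<rho> \<Longrightarrow> \<bar>g a - g b\<bar> < \<eta> * s ^ DIM('a)"
    using unif_cont_on[OF gc Cc, of "\<eta> * s ^ DIM('a)"] \<eta> sn by auto
  define d where "d = min 1 (\<rho> * s / 2) / DIM('a)"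
  have d: "d > 0" unfolding d_def using \<rho> s by simp
  have nd1: "DIM('a) * d \<le> 1" and nd2: "DIM('a) * d \<le> \<rho> * s / 2" unfolding d_def by auto
  define P where "P = rep d ` Q"
  have Pfin: "finite P" unfolding P_def by (rule rep_finite[OF Qb d])
  define w where "w p' = (\<integral>y. \<phi> y * indicator (rep d -` {p'}) y \<partial>lborel)" for p'
  have w0: "w p' \<ge> 0" for p' unfolding w_def by (rule integral_nonneg_AE) (use \<phi>0 in \<open>auto simp: indicator_def\<close>)
  have wsum: "(\<Sum>p'\<in>P. w p') = (\<integral>y. \<phi> y \<partial>lborel)"
    unfolding w_def P_def by (rule weights_sum[OF Qb d \<phi>Q \<phi>i])
  have riemE: "\<bar>(\<Sum>p'\<in>P. w p' * gsc g s (x - p')) - conv x\<bar> \<le> \<eta>" if x: "x \<in> K" for x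
  proof -
    have "ennreal \<bar>(\<Sum>p'\<in>P. w p' * gsc g s (x - p')) - conv x\<bar>
        \<le> (\<integral>\<^sup>+y. ennreal (\<bar>\<phi> y\<bar> * \<bar>gsc g s (x - rep d y) - gsc g s (x - y)\<bar>) \<partial>lborel)"
      unfolding w_def conv_def P_def by (rule riemann_pointwise[OF _ _ g0 gi s d \<phi>M \<phi>Q Qb \<phi>i]) simp_all
    also have "\<dots> \<le> (\<integral>\<^sup>+y. ennreal \<bar>\<phi> y\<bar> * ennreal \<eta> \<partial>lborel)"
    proof (intro nn_integral_mono)
      fix y :: 'a
      show "ennreal (\<bar>\<phi> y\<bar> * \<bar>gsc g s (x - rep d y) - gsc g s (x - y)\<bar>) \<le> ennreal \<bar>\<phi> y\<bar> * ennreal \<eta>"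
      proof (cases "y \<in> Q")
        case False then show ?thesis using \<phi>Q by simp
      next
        case True
        have ny: "norm y \<le> R0 + 1" using True by (simp add: Q_def)
        have nx: "norm x \<le> R0" using R0(2)[OF x] .
        have nr: "norm (y - rep d y) \<le> 1" using rep_dist[OF d, of y] nd1 by linarith
        have a1: "(x - rep d y) /\<^sub>R s \<in> C"
        proof -
          have "norm (x - rep d y) \<le> norm (x - y) + norm (y - rep d y)"
            by (metis diff_add_cancel norm_triangle_ineq add_diff_eq diff_diff_eq2)
          also have "\<dots> \<le> 2 * R0 + 2" using norm_triangle_ineq4[of x y] nx ny nr by linarith
          finally have "norm (x - rep d y) / s \<le> (2 * R0 + 2) / s" using s by (intro divide_right_mono) auto
          then show ?thesis using s by (simp add: C_def divide_inverse_commute)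
        qed
        have a2: "(x - y) /\<^sub>R s \<in> C"
        proof -
          have "norm (x - y) \<le> 2 * R0 + 2" using norm_triangle_ineq4[of x y] nx ny by linarith
          then have "norm (x - y) / s \<le> (2 * R0 + 2) / s" using s by (intro divide_right_mono) auto
          then show ?thesis using s by (simp add: C_def divide_inverse_commute)
        qed
        have "dist ((x - rep d y) /\<^sub>R s) ((x - y) /\<^sub>R s) = norm (y - rep d y) / s"
        proof -
          have "(x - rep d y) /\<^sub>R s - (x - y) /\<^sub>R s = (y - rep d y) /\<^sub>R s" by (simp add: algebra_simps)
          then show ?thesis using s by (simp add: dist_norm divide_inverse_commute)
        qed
        also have "\<dots> \<le> DIM('a) * d / s" using rep_dist[OF d, of y] s by (intro divide_right_mono) auto
        also have "\<dots> \<le> \<rho> / 2" using nd2 s by (simp add: field_simps)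
        also have "\<dots> < \<rho>" using \<rho> by simp
        finally have "\<bar>g ((x - rep d y) /\<^sub>R s) - g ((x - y) /\<^sub>R s)\<bar> < \<eta> * s ^ DIM('a)"
          by (rule \<rho>(2)[OF a1 a2])
        then have "\<bar>gsc g s (x - rep d y) - gsc g s (x - y)\<bar> \<le> \<eta>"
          using sn by (simp add: gsc_def diff_divide_distrib[symmetric] abs_divide pos_divide_le_eq less_imp_le)
        then have "\<bar>\<phi> y\<bar> * \<bar>gsc g s (x - rep d y) - gsc g s (x - y)\<bar> \<le> \<bar>\<phi> y\<bar> * \<eta>" by (intro mult_left_mono) auto
        then show ?thesis using \<eta> by (simp add: ennreal_mult[symmetric] ennreal_leI)
      qed
    qed
    also have "\<dots> = (\<integral>\<^sup>+y. ennreal \<bar>\<phi> y\<bar> \<partial>lborel) * ennreal \<eta>" by (rule nn_integral_multc) simp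
    also have "\<dots> \<le> 1 * ennreal \<eta>" by (intro mult_right_mono \<phi>nn) simp
    finally show ?thesis using \<eta> by (simp add: ennreal_le_iff)
  qed
  obtain Gm where Gm: "Gm \<ge> 0" "\<And>y. y \<in> cball 0 1 \<Longrightarrow> \<bar>g y\<bar> \<le> Gm"
    using cont_bound_on[OF gc, of "cball 0 1"] by auto
  define S where "S = max 1 (max (R0 + 1) ((Gm + 1) / \<eta>))"
  have S1: "S \<ge> 1" and SR: "S \<ge> R0 + 1" and SG: "S \<ge> (Gm + 1) / \<eta>" unfolding S_def by auto
  define c0 where "c0 = 1 - (\<integral>x. \<phi> x \<partial>lborel)"
  have c0pos: "c0 \<ge> 0" using I\<phi> unfolding c0_def by simp
  have c0le1: "c0 \<le> 1" unfolding c0_def using integral_nonneg_AE[of \<phi> lborel] \<phi>0 by auto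
  have leftE: "\<bar>c0 * gsc g S (x - 0)\<bar> \<le> \<eta>" if x: "x \<in> K" for x
  proof -
    have "norm (x /\<^sub>R S) = norm x / S" using S1 by (simp add: divide_inverse_commute)
    also have "\<dots> \<le> 1" using R0(2)[OF x] SR S1 by (simp add: divide_le_eq)
    finally have xS: "x /\<^sub>R S \<in> cball 0 1" by simp
    have SS: "S \<le> S ^ DIM('a)"
      using power_increasing[of 1 "DIM('a)" S] S1 DIM_positive[where 'a='a] by simp
    have "\<bar>gsc g S (x - 0)\<bar> = \<bar>g (x /\<^sub>R S)\<bar> / S ^ DIM('a)" using S1 by (simp add: gsc_def abs_divide)
    also have "\<dots> \<le> Gm / S ^ DIM('a)" using Gm(2)[OF xS] S1 by (intro divide_right_mono) auto
    also have "\<dots> \<le> Gm / S" using Gm(1) S1 SS by (intro divide_left_mono) auto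
    also have "\<dots> \<le> \<eta>"
    proof -
      have "Gm \<le> (Gm + 1)" by simp
      also have "\<dots> \<le> S * \<eta>" using SG \<eta> by (simp add: divide_le_eq)
      finally show ?thesis using S1 by (simp add: divide_le_eq mult.commute)
    qed
    finally have gS: "\<bar>gsc g S (x - 0)\<bar> \<le> \<eta>" .
    have "\<bar>c0 * gsc g S (x - 0)\<bar> = c0 * \<bar>gsc g S (x - 0)\<bar>" using c0pos by (simp add: abs_mult)
    also have "\<dots> \<le> 1 * \<eta>" using c0pos c0le1 gS \<eta> by (intro mult_mono) auto
    finally show ?thesis by simp
  qed
  define h where "h x = (\<Sum>p'\<in>P. w p' * gsc g s (x - p')) + c0 * gsc g S (x - 0)" for x
  have hmix: "h \<in> mixtures g m" if "m \<ge> card P + 1" for m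
  proof -
    have "(\<lambda>x. (\<Sum>p'\<in>P. w p' * gsc g s (x - p')) + c0 * gsc g S (x - 0)) \<in> mixtures g m"
      by (rule mixture_finite[OF Pfin w0 c0pos _ s _ that]) (use wsum S1 in \<open>simp_all add: c0_def\<close>)
    then show ?thesis unfolding h_def[abs_def] .
  qed
  have herr: "\<bar>f x - h x\<bar> \<le> \<epsilon>" if x: "x \<in> K" for x
  proof -
    have "\<bar>f x - h x\<bar> \<le> \<bar>conv x - f x\<bar> + \<bar>(\<Sum>p'\<in>P. w p' * gsc g s (x - p')) - conv x\<bar> + \<bar>c0 * gsc g S (x - 0)\<bar>"
      unfolding h_def by linarith
    also have "\<dots> \<le> 2 * \<eta> + \<eta> + \<eta>" using convE[OF x] riemE[OF x] leftE[OF x] by linarith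
    also have "\<dots> = \<epsilon>" unfolding \<eta>_def by simp
    finally show ?thesis .
  qed
  show ?thesis
    by (intro exI[of _ "card P + 1"] allI impI bexI[of _ h] ballI herr hmix)
qed

lemma partA:
  fixes f g :: "'a::euclidean_space \<Rightarrow> real" and K :: "'a set"
  assumes pf: "is_pdf f" and pg: "is_pdf g" and fc: "continuous_on UNIV f" and gc: "continuous_on UNIV g"
    and K: "compact K"
  shows "\<exists>h::nat \<Rightarrow> 'a \<Rightarrow> real. (\<forall>m\<ge>1. h m \<in> mixtures g m) \<and> (\<lambda>m. SUP x\<in>K. ennreal \<bar>f x - h m x\<bar>) \<longlonglongrightarrow> 0"
proof -
  have f0: "\<And>x. f x \<ge> 0" and f1: "(\<integral>\<^sup>+x. ennreal (f x) \<partial>lborel) = 1"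
    using pf by (auto simp: is_pdf_def nn_integral_completion)
  have g0: "\<And>x. g x \<ge> 0" and g1: "(\<integral>\<^sup>+x. ennreal (g x) \<partial>lborel) = 1"
    using pg by (auto simp: is_pdf_def nn_integral_completion)
  have approx: "\<exists>N. \<forall>m\<ge>N. \<exists>h\<in>mixtures g m. (SUP x\<in>K. ennreal \<bar>f x - h x\<bar>) < ennreal e" if e: "e > 0" for e
  proof -
    obtain N where N: "\<And>m. m \<ge> N \<Longrightarrow> \<exists>h\<in>mixtures g m. \<forall>x\<in>K. \<bar>f x - h x\<bar> \<le> e / 2"
      using partA_core[OF fc gc f0 f1 g0 g1 K, of "e/2"] e by auto
    show ?thesis
    proof (intro exI allI impI)
      fix m assume m: "m \<ge> N"
      obtain h where h: "h \<in> mixtures g m" "\<And>x. x \<in> K \<Longrightarrow> \<bar>f x - h x\<bar> \<le> e / 2" using N[OF m] by auto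
      have "(SUP x\<in>K. ennreal \<bar>f x - h x\<bar>) \<le> ennreal (e / 2)"
        by (rule SUP_least) (use h(2) in \<open>auto intro: ennreal_leI\<close>)
      also have "\<dots> < ennreal e" using e by (intro ennreal_lessI) auto
      finally show "\<exists>h\<in>mixtures g m. (SUP x\<in>K. ennreal \<bar>f x - h x\<bar>) < ennreal e" using h(1) by blast
    qed
  qed
  show ?thesis
    by (rule select_seq[where E="\<lambda>h. SUP x\<in>K. ennreal \<bar>f x - h x\<bar>" and M="mixtures g"])
       (use mixtures_nonempty approx in auto)
qed

theorem theorem2:
  fixes f g :: "'a::euclidean_space \<Rightarrow> real"
  assumes "is_pdf f" and "is_pdf g"
  shows "(\<forall>K::'a set. continuous_on UNIV f \<and> continuous_on UNIV g \<and> compact K \<longrightarrow>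
            (\<exists>h::nat \<Rightarrow> 'a \<Rightarrow> real. (\<forall>m\<ge>1. h m \<in> mixtures g m) \<and>
               (\<lambda>m. SUP x\<in>K. ennreal \<bar>f x - h m x\<bar>) \<longlonglongrightarrow> 0))
       \<and> (\<forall>p::real. 1 \<le> p \<and> in_Lp p f \<and> in_Linf g \<longrightarrow>
            (\<exists>h::nat \<Rightarrow> 'a \<Rightarrow> real. (\<forall>m\<ge>1. h m \<in> mixtures g m) \<and>
               (\<lambda>m. Lp_dist_pow p f (h m)) \<longlonglongrightarrow> 0))"
  using partA[OF assms] partB[OF assms] by blast

end
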